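(* Let $x_1,\ldots,x_n$ ($n\ge2$) be independent random variables with common mean $\mu_x$ and $|x_i-\mu_x|\le C_x$ for a constant $C_x$. Let $s_n=\sum_{i=1}^n x_i$ and let $\hat s_n$ be computed by recursive summation: $\hat s_1=x_1$, $\hat s_k=(\hat s_{k-1}+x_k)(1+\delta_k)$ for $2\le k\le n$, and $E_n=\hat s_n-s_n$. Assume the rounding errors $\delta_2,\ldots,\delta_n$ are random variables of mean zero such that for every $k$, \[ \mathbb{E}(\delta_k\mid \delta_2,\ldots,\delta_{k-1},x_1,\ldots,x_n)=0, \] and $a_k\le\delta_k\le b_k$, where $a_k,b_k$ are functions of $\delta_1,\ldots,\delta_{k-1}$ and $x_1,\ldots,x_n$ with $b_k-a_k\le 2u$ for a constant $u>0$ (and $\delta_1=0$). Then for any $\delta\in(0,1)$, with probability at least $1-\delta$, \[ |E_n|\le \Bigl(\sum_{j=0}^{n-2}\kappa^j\Bigr)\bigl(\lambda|\mu_x|n^{3/2}+\lambda^2C_x n\bigr)u \;=\;\frac{1-\kappa^{n-1}}{1-\kappa}\bigl(\lambda|\mu_x|n^{3/2}+\lambda^2C_x n\bigr)u\quad(\kappa\ne1), \] where $\lambda=\sqrt{2\log(2n/\delta)}$ and $\kappa=\lambda\sqrt{n}\,u$.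
   Context: The recurrence models recursive summation in floating-point arithmetic with unit roundoff $u$ (including stochastic rounding); $\delta_k$ is the relative rounding error at step $k$. *)

theory Defs
  imports "HOL-Probability.Probability"
begin

fun rec_sum :: "(nat \<Rightarrow> real) \<Rightarrow> (nat \<Rightarrow> real) \<Rightarrow> nat \<Rightarrow> real" where
  "rec_sum x d 0 = 0"
| "rec_sum x d (Suc 0) = x 1"
| "rec_sum x d (Suc (Suc k)) = (rec_sum x d (Suc k) + x (Suc (Suc k))) * (1 + d (Suc (Suc k)))"

definition info_alg ::
  "'a measure \<Rightarrow> (nat \<Rightarrow> 'a \<Rightarrow> real) \<Rightarrow> (nat \<Rightarrow> 'a \<Rightarrow> real) \<Rightarrow> nat \<Rightarrow> nat \<Rightarrow> 'a measure" where
  "info_alg M x d n k = sigma (space M)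
     ({d i -` B \<inter> space M | i B. i \<in> {2..<k} \<and> B \<in> sets borel} \<union>
      {x i -` B \<inter> space M | i B. i \<in> {1..n} \<and> B \<in> sets borel})"

end

theory Submission
  imports Defs
begin

lemma hoeff_det_pos:
  fixes c a l :: real
  assumes c: "c > 0" and a: "-c \<le> a" "a \<le> 0" and l: "l \<ge> 0"
  shows "((a+c) * exp (l*a) - a * exp (l*(a+c))) / c \<le> exp (l^2 * c^2 / 8)"
proof -
  define p where "p = -a/c"
  define h where "h = l*c"
  have p0: "p \<ge> 0" "p \<le> 1" using a c by (auto simp: p_def field_simps)
  have h0: "h \<ge> 0" using l c by (simp add: h_def)
  have pos: "1 + p * (exp h - 1) > 0"
  proof -
    have "exp h \<ge> 1" using h0 by simp
    then have "p * (exp h - 1) \<ge> 0" using p0 by simp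
    then show ?thesis by simp
  qed
  have L: "-h * p + ln (1 + p * (exp h - 1)) \<le> h^2/8"
    using Hoeffdings_lemma_aux[OF h0 p0(1)] by simp
  have "exp (-h * p + ln (1 + p * (exp h - 1))) = exp (-h*p) * exp (ln (1 + p * (exp h - 1)))"
    by (rule exp_add)
  also have "exp (ln (1 + p * (exp h - 1))) = 1 + p * (exp h - 1)" using pos by simp
  finally have "exp (-h * p + ln (1 + p * (exp h - 1))) = exp (-h*p) * (1 + p * (exp h - 1))" .
  also have "\<dots> = ((a+c) * exp (l*a) - a * exp (l*(a+c))) / c"
  proof -
    have e1: "exp (-h*p) = exp (l*a)" using c by (simp add: h_def p_def)
    have e2: "exp (l*a) * exp h = exp (l*(a+c))" by (simp add: h_def distrib_left exp_add)
    have ar: "\<And>E1 Eh::real. E1*(1 + (-a/c)*(Eh - 1)) = ((a+c)*E1 - a*(E1*Eh))/c"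
      using c by (simp add: field_simps)
    show ?thesis unfolding e1 by (simp only: p_def ar e2)
  qed
  finally have "((a+c) * exp (l*a) - a * exp (l*(a+c))) / c = exp (-h * p + ln (1 + p * (exp h - 1)))" by simp
  also have "\<dots> \<le> exp (h^2/8)" using L by simp
  also have "h^2/8 = l^2 * c^2/8" by (simp add: h_def power_mult_distrib)
  finally show ?thesis .
qed

lemma hoeff_det:
  fixes c a l :: real
  assumes c: "c > 0" and a: "-c \<le> a" "a \<le> 0"
  shows "((a+c) * exp (l*a) - a * exp (l*(a+c))) / c \<le> exp (l^2 * c^2 / 8)"
proof (cases "l \<ge> 0")
  case True then show ?thesis using hoeff_det_pos[OF c a] by simp
next
  case False
  have "((-(a+c)+c) * exp ((-l)*(-(a+c))) - (-(a+c)) * exp ((-l)*((-(a+c))+c))) / c \<le> exp ((-l)^2 * c^2 / 8)"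
    by (rule hoeff_det_pos) (use c a False in auto)
  then show ?thesis by (simp add: algebra_simps)
qed

lemma exp_chord:
  fixes c a l y :: real
  assumes c: "c > 0" and y: "a \<le> y" "y \<le> a + c"
  shows "exp (l*y) \<le> ((a+c) * exp (l*a) - a * exp (l*(a+c))) / c + ((exp (l*(a+c)) - exp (l*a)) / c) * y"
proof -
  define t where "t = (y - a)/c"
  have t: "0 \<le> t" "t \<le> 1" using c y by (auto simp: t_def field_simps)
  have yt: "y = (1-t)*a + t*(a+c)" using c by (simp add: t_def field_simps)
  have conv: "convex_on UNIV exp" by (rule convex_on_exp[of 1, simplified])
  have "exp (l*y) = exp ((1-t) * (l*a) + t * (l*(a+c)))" by (simp add: yt algebra_simps)
  also have "\<dots> \<le> (1-t) * exp (l*a) + t * exp (l*(a+c))"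
    using convex_onD[OF conv, of t "l*a" "l*(a+c)"] t by simp
  also have "\<dots> = ((a+c) * exp (l*a) - a * exp (l*(a+c))) / c + ((exp (l*(a+c)) - exp (l*a)) / c) * y"
    using c by (simp add: t_def field_simps)
  finally show ?thesis .
qed

lemma mul_abs_le:
  fixes l z B :: real
  assumes "\<bar>z\<bar> \<le> B" shows "l * z \<le> \<bar>l\<bar> * B"
proof -
  have "l * z \<le> \<bar>l\<bar> * \<bar>z\<bar>" by (metis abs_ge_self abs_mult)
  also have "\<dots> \<le> \<bar>l\<bar> * B" using assms by (intro mult_left_mono) auto
  finally show ?thesis .
qed


lemma stop_sum:
  fixes X :: "nat \<Rightarrow> real" and t :: real
  assumes t: "t \<ge> 0" and km: "k \<le> m" and ex: "\<bar>\<Sum>q<k. X q\<bar> > t"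
  shows "\<bar>\<Sum>q<m. (if \<forall>k'\<in>{..q}. \<bar>\<Sum>j<k'. X j\<bar> \<le> t then X q else 0)\<bar> > t"
proof -
  define P where "P = (\<lambda>k. \<bar>\<Sum>q<k. X q\<bar> > t)"
  define k0 where "k0 = (LEAST k. P k)"
  have Pk0: "P k0" unfolding k0_def by (rule LeastI[of P k]) (use ex in \<open>simp add: P_def\<close>)
  have k0k: "k0 \<le> k" unfolding k0_def by (rule Least_le) (use ex in \<open>simp add: P_def\<close>)
  have less: "\<not> P k'" if "k' < k0" for k' using not_less_Least[OF that[unfolded k0_def]] by simp
  have "(\<Sum>q<m. (if \<forall>k'\<in>{..q}. \<bar>\<Sum>j<k'. X j\<bar> \<le> t then X q else 0))
      = (\<Sum>q<m. (if q < k0 then X q else 0))"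
  proof (rule sum.cong[OF refl])
    fix q assume "q \<in> {..<m}"
    show "(if \<forall>k'\<in>{..q}. \<bar>\<Sum>j<k'. X j\<bar> \<le> t then X q else 0) = (if q < k0 then X q else 0)"
    proof (cases "q < k0")
      case True
      then have "\<forall>k'\<in>{..q}. \<bar>\<Sum>j<k'. X j\<bar> \<le> t" using less unfolding P_def by (auto simp: not_less)
      then show ?thesis using True by simp
    next
      case False
      then have "k0 \<in> {..q}" by simp
      then have "\<not> (\<forall>k'\<in>{..q}. \<bar>\<Sum>j<k'. X j\<bar> \<le> t)" using Pk0 unfolding P_def by force
      then show ?thesis using False by (simp only: if_False)
    qed
  qed
  also have "\<dots> = (\<Sum>q<k0. X q)"
  proof -
    have "(\<Sum>q<m. (if q < k0 then X q else 0)) = (\<Sum>q\<in>{..<m} \<inter> {q. q < k0}. X q)"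
      using sum.inter_restrict[of "{..<m}" X "{q. q<k0}"] by simp
    also have "{..<m} \<inter> {q. q < k0} = {..<k0}" using k0k km by auto
    finally show ?thesis .
  qed
  finally show ?thesis using Pk0 unfolding P_def by simp
qed


lemma chernoff1:
  fixes Z :: "nat \<Rightarrow> 'a \<Rightarrow> real"
  assumes P: "prob_space M" and m: "m > 0" and c: "c > 0" and t: "t > 0"
   and meas: "\<And>i. i < m \<Longrightarrow> Z i \<in> borel_measurable M"
   and bnd: "\<And>i. i < m \<Longrightarrow> AE \<omega> in M. \<bar>Z i \<omega>\<bar> \<le> K"
   and KH: "\<And>i l. i < m \<Longrightarrow> (\<integral>\<omega>. exp (l * (\<Sum>j<i. Z j \<omega>)) * exp (l * Z i \<omega>) \<partial>M)
              \<le> exp (l^2*c^2/8) * (\<integral>\<omega>. exp (l * (\<Sum>j<i. Z j \<omega>)) \<partial>M)"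
  shows "measure M {\<omega> \<in> space M. (\<Sum>i<m. Z i \<omega>) > t} \<le> exp (-2*t^2/(real m * c^2))"
proof -
  interpret prob_space M by (rule P)
  have Smeas: "(\<lambda>\<omega>. \<Sum>j<k. Z j \<omega>) \<in> borel_measurable M" if "k \<le> m" for k
    by (rule borel_measurable_sum) (use meas that in auto)
  have intg: "integrable M (\<lambda>\<omega>. exp (l * (\<Sum>j<k. Z j \<omega>)))" if "k \<le> m" for k l
  proof (rule integrable_const_bound[where B="exp (\<bar>l\<bar> * (real k * K))"])
    have "AE \<omega> in M. \<forall>i\<in>{..<k}. \<bar>Z i \<omega>\<bar> \<le> K"
      by (rule AE_finite_allI) (use bnd that in auto)
    then show "AE \<omega> in M. norm (exp (l * (\<Sum>j<k. Z j \<omega>))) \<le> exp (\<bar>l\<bar> * (real k * K))"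
    proof eventually_elim
      case (elim \<omega>)
      have "\<bar>\<Sum>j<k. Z j \<omega>\<bar> \<le> (\<Sum>j<k. \<bar>Z j \<omega>\<bar>)" by (rule sum_abs)
      also have "\<dots> \<le> (\<Sum>j<k. K)" by (rule sum_mono) (use elim in auto)
      finally have "\<bar>\<Sum>j<k. Z j \<omega>\<bar> \<le> real k * K" by simp
      then have "l * (\<Sum>j<k. Z j \<omega>) \<le> \<bar>l\<bar> * (real k * K)"
        by (metis abs_ge_self abs_mult abs_ge_zero mult_left_mono order_trans)
      then show ?case by simp
    qed
    show "(\<lambda>\<omega>. exp (l * (\<Sum>j<k. Z j \<omega>))) \<in> borel_measurable M" using Smeas[OF that] by measurable
  qed
  have step: "(\<integral>\<omega>. exp (l * (\<Sum>j<k. Z j \<omega>)) \<partial>M) \<le> exp (real k * (l^2*c^2/8))" if "k \<le> m" for k l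
    using that
  proof (induction k)
    case 0 then show ?case by (simp add: prob_space)
  next
    case (Suc k)
    have "(\<integral>\<omega>. exp (l * (\<Sum>j<Suc k. Z j \<omega>)) \<partial>M) = (\<integral>\<omega>. exp (l * (\<Sum>j<k. Z j \<omega>)) * exp (l * Z k \<omega>) \<partial>M)"
      by (simp add: distrib_left exp_add)
    also have "\<dots> \<le> exp (l^2*c^2/8) * (\<integral>\<omega>. exp (l * (\<Sum>j<k. Z j \<omega>)) \<partial>M)"
      using KH[of k l] Suc.prems by simp
    also have "\<dots> \<le> exp (l^2*c^2/8) * exp (real k * (l^2*c^2/8))"
      using Suc by (intro mult_left_mono) auto
    also have "\<dots> = exp (real (Suc k) * (l^2*c^2/8))" by (simp add: exp_add[symmetric] algebra_simps)
    finally show ?case .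
  qed
  define l where "l = 4*t/(real m * c^2)"
  have l0: "l \<ge> 0" using t c m by (simp add: l_def)
  have setm: "{\<omega> \<in> space M. (\<Sum>i<m. Z i \<omega>) > t} \<in> sets M"
    using Smeas[of m] by measurable
  have "measure M {\<omega> \<in> space M. (\<Sum>i<m. Z i \<omega>) > t}
      = (\<integral>\<omega>. indicator {\<omega> \<in> space M. (\<Sum>i<m. Z i \<omega>) > t} \<omega> \<partial>M)"
    using setm by simp
  also have "\<dots> \<le> (\<integral>\<omega>. exp (-l*t) * exp (l * (\<Sum>j<m. Z j \<omega>)) \<partial>M)"
  proof (rule integral_mono)
    show "integrable M (indicator {\<omega> \<in> space M. (\<Sum>i<m. Z i \<omega>) > t} :: 'a \<Rightarrow> real)"
      by (rule integrable_real_indicator[OF setm]) (simp add: less_top[symmetric])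
    show "integrable M (\<lambda>\<omega>. exp (-l*t) * exp (l * (\<Sum>j<m. Z j \<omega>)))"
      using intg[of m l] by simp
    fix \<omega> assume "\<omega> \<in> space M"
    show "indicator {\<omega> \<in> space M. (\<Sum>i<m. Z i \<omega>) > t} \<omega> \<le> exp (-l*t) * exp (l * (\<Sum>j<m. Z j \<omega>))"
    proof (cases "(\<Sum>i<m. Z i \<omega>) > t")
      case True
      then have "l * t \<le> l * (\<Sum>j<m. Z j \<omega>)" using l0 by (intro mult_left_mono) auto
      then have "1 \<le> exp (-l*t) * exp (l * (\<Sum>j<m. Z j \<omega>))" by (simp add: exp_add[symmetric])
      then show ?thesis by (simp add: indicator_def)
    qed (simp add: indicator_def)
  qed
  also have "\<dots> = exp (-l*t) * (\<integral>\<omega>. exp (l * (\<Sum>j<m. Z j \<omega>)) \<partial>M)" by simp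
  also have "\<dots> \<le> exp (-l*t) * exp (real m * (l^2*c^2/8))"
    using step[of m l] by (intro mult_left_mono) auto
  also have "\<dots> = exp (-2*t^2/(real m * c^2))"
  proof -
    have "-l*t + real m * (l^2*c^2/8) = -2*t^2/(real m * c^2)"
      using m c by (simp add: l_def field_simps power2_eq_square)
    then show ?thesis by (simp add: exp_add[symmetric])
  qed
  finally show ?thesis .
qed

lemma chernoff2:
  fixes Z :: "nat \<Rightarrow> 'a \<Rightarrow> real"
  assumes P: "prob_space M" and m: "m > 0" and c: "c > 0" and t: "t > 0"
   and meas: "\<And>i. i < m \<Longrightarrow> Z i \<in> borel_measurable M"
   and bnd: "\<And>i. i < m \<Longrightarrow> AE \<omega> in M. \<bar>Z i \<omega>\<bar> \<le> K"
   and KH: "\<And>i l. i < m \<Longrightarrow> (\<integral>\<omega>. exp (l * (\<Sum>j<i. Z j \<omega>)) * exp (l * Z i \<omega>) \<partial>M)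
              \<le> exp (l^2*c^2/8) * (\<integral>\<omega>. exp (l * (\<Sum>j<i. Z j \<omega>)) \<partial>M)"
  shows "measure M {\<omega> \<in> space M. \<bar>\<Sum>i<m. Z i \<omega>\<bar> > t} \<le> 2 * exp (-2*t^2/(real m * c^2))"
proof -
  interpret prob_space M by (rule P)
  have Smeas: "(\<lambda>\<omega>. \<Sum>j<m. Z j \<omega>) \<in> borel_measurable M"
    by (rule borel_measurable_sum) (use meas in auto)
  have 1: "measure M {\<omega> \<in> space M. (\<Sum>i<m. Z i \<omega>) > t} \<le> exp (-2*t^2/(real m * c^2))"
    by (rule chernoff1[OF P m c t meas bnd KH])
  have 2: "measure M {\<omega> \<in> space M. (\<Sum>i<m. - Z i \<omega>) > t} \<le> exp (-2*t^2/(real m * c^2))"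
  proof (rule chernoff1[OF P m c t])
    show "\<And>i. i < m \<Longrightarrow> (\<lambda>\<omega>. - Z i \<omega>) \<in> borel_measurable M" using meas by simp
    show "\<And>i. i < m \<Longrightarrow> AE \<omega> in M. \<bar>- Z i \<omega>\<bar> \<le> K" using bnd by simp
    fix i l assume i: "i < m"
    have "(\<integral>\<omega>. exp (l * (\<Sum>j<i. - Z j \<omega>)) * exp (l * - Z i \<omega>) \<partial>M)
         = (\<integral>\<omega>. exp ((-l) * (\<Sum>j<i. Z j \<omega>)) * exp ((-l) * Z i \<omega>) \<partial>M)"
      by (simp add: sum_negf)
    also have "\<dots> \<le> exp ((-l)^2*c^2/8) * (\<integral>\<omega>. exp ((-l) * (\<Sum>j<i. Z j \<omega>)) \<partial>M)"
      by (rule KH[OF i])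
    also have "\<dots> = exp (l^2*c^2/8) * (\<integral>\<omega>. exp (l * (\<Sum>j<i. - Z j \<omega>)) \<partial>M)"
      by (simp add: sum_negf)
    finally show "(\<integral>\<omega>. exp (l * (\<Sum>j<i. - Z j \<omega>)) * exp (l * - Z i \<omega>) \<partial>M)
              \<le> exp (l^2*c^2/8) * (\<integral>\<omega>. exp (l * (\<Sum>j<i. - Z j \<omega>)) \<partial>M)" .
  qed
  have "{\<omega> \<in> space M. \<bar>\<Sum>i<m. Z i \<omega>\<bar> > t} =
        {\<omega> \<in> space M. (\<Sum>i<m. Z i \<omega>) > t} \<union> {\<omega> \<in> space M. (\<Sum>i<m. - Z i \<omega>) > t}"
    by (auto simp: sum_negf)
  then have "measure M {\<omega> \<in> space M. \<bar>\<Sum>i<m. Z i \<omega>\<bar> > t} \<le>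
     measure M {\<omega> \<in> space M. (\<Sum>i<m. Z i \<omega>) > t} + measure M {\<omega> \<in> space M. (\<Sum>i<m. - Z i \<omega>) > t}"
  proof -
    have m1: "{\<omega> \<in> space M. (\<Sum>i<m. Z i \<omega>) > t} \<in> sets M" using Smeas by measurable
    have "{\<omega> \<in> space M. - (\<Sum>i<m. Z i \<omega>) > t} \<in> sets M" using Smeas by measurable
    then have m2: "{\<omega> \<in> space M. (\<Sum>i<m. - Z i \<omega>) > t} \<in> sets M" by (simp add: sum_negf)
    show ?thesis unfolding \<open>{\<omega> \<in> space M. \<bar>\<Sum>i<m. Z i \<omega>\<bar> > t} = _\<close> by (rule measure_Un_le[OF m1 m2])
  qed
  then show ?thesis using 1 2 by simp
qed


lemma sign_ae:
  assumes SF: "sigma_finite_subalgebra M F"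
    and dm[measurable]: "dl \<in> borel_measurable M" and am: "a \<in> borel_measurable F" and bm: "b \<in> borel_measurable F"
    and ab: "\<And>\<omega>. \<omega> \<in> space M \<Longrightarrow> a \<omega> \<le> dl \<omega> \<and> dl \<omega> \<le> b \<omega>"
    and ce: "AE \<omega> in M. real_cond_exp M F dl \<omega> = 0"
  shows "AE \<omega> in M. a \<omega> \<le> 0 \<and> 0 \<le> b \<omega>"
proof -
  interpret sigma_finite_subalgebra M F by (rule SF)
  have am'[measurable]: "a \<in> borel_measurable M" by (rule measurable_from_subalg[OF subalg am])
  have bm'[measurable]: "b \<in> borel_measurable M" by (rule measurable_from_subalg[OF subalg bm])
  define P where "P = nn_cond_exp M F (\<lambda>\<omega>. ennreal (dl \<omega>))"
  define N where "N = nn_cond_exp M F (\<lambda>\<omega>. ennreal (- dl \<omega>))"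
  have aF: "(\<lambda>\<omega>. ennreal (a \<omega>)) \<in> borel_measurable F" using am by measurable
  have bF: "(\<lambda>\<omega>. ennreal (b \<omega>)) \<in> borel_measurable F" using bm by measurable
  have maF: "(\<lambda>\<omega>. ennreal (- a \<omega>)) \<in> borel_measurable F" using am by measurable
  have mbF: "(\<lambda>\<omega>. ennreal (- b \<omega>)) \<in> borel_measurable F" using bm by measurable
  have h1: "AE \<omega> in M. ennreal (a \<omega>) \<le> P \<omega>"
  proof -
    have "AE \<omega> in M. nn_cond_exp M F (\<lambda>\<omega>. ennreal (a \<omega>)) \<omega> \<le> P \<omega>"
      unfolding P_def by (rule nn_cond_exp_mono) (use ab in \<open>auto intro!: AE_I2 ennreal_leI\<close>)
    moreover have "AE \<omega> in M. ennreal (a \<omega>) = nn_cond_exp M F (\<lambda>\<omega>. ennreal (a \<omega>)) \<omega>"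
      by (rule nn_cond_exp_F_meas[OF aF])
    ultimately show ?thesis by eventually_elim simp
  qed
  have h2: "AE \<omega> in M. P \<omega> \<le> ennreal (b \<omega>)"
  proof -
    have "AE \<omega> in M. P \<omega> \<le> nn_cond_exp M F (\<lambda>\<omega>. ennreal (b \<omega>)) \<omega>"
      unfolding P_def by (rule nn_cond_exp_mono) (use ab in \<open>auto intro!: AE_I2 ennreal_leI\<close>)
    moreover have "AE \<omega> in M. ennreal (b \<omega>) = nn_cond_exp M F (\<lambda>\<omega>. ennreal (b \<omega>)) \<omega>"
      by (rule nn_cond_exp_F_meas[OF bF])
    ultimately show ?thesis by eventually_elim simp
  qed
  have h3: "AE \<omega> in M. N \<omega> \<le> ennreal (- a \<omega>)"
  proof -
    have "AE \<omega> in M. N \<omega> \<le> nn_cond_exp M F (\<lambda>\<omega>. ennreal (- a \<omega>)) \<omega>"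
      unfolding N_def by (rule nn_cond_exp_mono) (use ab in \<open>auto intro!: AE_I2 ennreal_leI\<close>)
    moreover have "AE \<omega> in M. ennreal (- a \<omega>) = nn_cond_exp M F (\<lambda>\<omega>. ennreal (- a \<omega>)) \<omega>"
      by (rule nn_cond_exp_F_meas[OF maF])
    ultimately show ?thesis by eventually_elim simp
  qed
  have h4: "AE \<omega> in M. ennreal (- b \<omega>) \<le> N \<omega>"
  proof -
    have "AE \<omega> in M. nn_cond_exp M F (\<lambda>\<omega>. ennreal (- b \<omega>)) \<omega> \<le> N \<omega>"
      unfolding N_def by (rule nn_cond_exp_mono) (use ab in \<open>auto intro!: AE_I2 ennreal_leI\<close>)
    moreover have "AE \<omega> in M. ennreal (- b \<omega>) = nn_cond_exp M F (\<lambda>\<omega>. ennreal (- b \<omega>)) \<omega>"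
      by (rule nn_cond_exp_F_meas[OF mbF])
    ultimately show ?thesis by eventually_elim simp
  qed
  have ce': "AE \<omega> in M. enn2real (P \<omega>) - enn2real (N \<omega>) = 0"
    using ce unfolding real_cond_exp_def P_def N_def .
  from h1 h2 h3 h4 ce' show ?thesis
  proof eventually_elim
    case (elim \<omega>)
    have Pfin: "P \<omega> < \<infinity>" using elim(2) by (simp add: le_less_trans)
    have Nfin: "N \<omega> < \<infinity>" using elim(3) by (simp add: le_less_trans)
    have "a \<omega> \<le> 0"
    proof (rule ccontr)
      assume "\<not> a \<omega> \<le> 0"
      then have a0: "a \<omega> > 0" by simp
      have "enn2real (ennreal (a \<omega>)) \<le> enn2real (P \<omega>)" using elim(1) Pfin by (intro enn2real_mono) auto
      then have "a \<omega> \<le> enn2real (P \<omega>)" using a0 by simp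
      moreover have "N \<omega> = 0" using elim(3) a0 by (simp add: ennreal_neg)
      ultimately show False using elim(5) a0 by simp
    qed
    moreover have "0 \<le> b \<omega>"
    proof (rule ccontr)
      assume "\<not> 0 \<le> b \<omega>"
      then have b0: "b \<omega> < 0" by simp
      have "enn2real (ennreal (- b \<omega>)) \<le> enn2real (N \<omega>)" using elim(4) Nfin by (intro enn2real_mono) auto
      then have "- b \<omega> \<le> enn2real (N \<omega>)" using b0 by simp
      moreover have "P \<omega> = 0" using elim(2) b0 by (simp add: ennreal_neg)
      ultimately show False using elim(5) b0 by simp
    qed
    ultimately show ?case by simp
  qed
qed

lemma KH_core:
  assumes P: "prob_space M" and SF: "sigma_finite_subalgebra M F"
    and dm[measurable]: "dl \<in> borel_measurable M" and Am: "A \<in> borel_measurable F"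
    and c: "c > 0" and Ab: "\<And>\<omega>. \<omega> \<in> space M \<Longrightarrow> -c \<le> A \<omega> \<and> A \<omega> \<le> 0"
    and dAE: "AE \<omega> in M. A \<omega> \<le> dl \<omega> \<and> dl \<omega> \<le> A \<omega> + c"
    and ce: "AE \<omega> in M. real_cond_exp M F dl \<omega> = 0"
    and Ym: "Y \<in> borel_measurable F" and Y0: "\<And>\<omega>. \<omega> \<in> space M \<Longrightarrow> 0 \<le> Y \<omega>"
    and YK: "AE \<omega> in M. Y \<omega> \<le> K"
    and gm: "g \<in> borel_measurable F" and gG: "\<And>\<omega>. \<omega> \<in> space M \<Longrightarrow> \<bar>g \<omega>\<bar> \<le> G"
  shows "(\<integral>\<omega>. Y \<omega> * exp (g \<omega> * dl \<omega>) \<partial>M) \<le> exp (G^2*c^2/8) * (\<integral>\<omega>. Y \<omega> \<partial>M)"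
proof -
  interpret prob_space M by (rule P)
  interpret S: sigma_finite_subalgebra M F by (rule SF)
  have [measurable]: "A \<in> borel_measurable M" by (rule measurable_from_subalg[OF S.subalg Am])
  have [measurable]: "Y \<in> borel_measurable M" by (rule measurable_from_subalg[OF S.subalg Ym])
  have [measurable]: "g \<in> borel_measurable M" by (rule measurable_from_subalg[OF S.subalg gm])
  define \<alpha> where "\<alpha> = (\<lambda>\<omega>. ((A \<omega>+c) * exp (g \<omega>*A \<omega>) - A \<omega> * exp (g \<omega>*(A \<omega>+c))) / c)"
  define \<beta> where "\<beta> = (\<lambda>\<omega>. (exp (g \<omega>*(A \<omega>+c)) - exp (g \<omega>*A \<omega>)) / c)"
  define E0 where "E0 = exp (G*c)"
  have G0: "G \<ge> 0" using gG[of "SOME \<omega>. \<omega> \<in> space M"] not_empty some_in_eq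
    by (metis abs_ge_zero order_trans)
  have amF: "\<alpha> \<in> borel_measurable F" unfolding \<alpha>_def using Am gm by measurable
  have bmF: "(\<lambda>\<omega>. Y \<omega> * \<beta> \<omega>) \<in> borel_measurable F" unfolding \<beta>_def using Am gm Ym by measurable
  have [measurable]: "\<alpha> \<in> borel_measurable M" by (rule measurable_from_subalg[OF S.subalg amF])
  have [measurable]: "\<beta> \<in> borel_measurable M" unfolding \<beta>_def by measurable
  have eb: "exp (g \<omega> * z) \<le> E0" if "\<omega> \<in> space M" "\<bar>z\<bar> \<le> c" for \<omega> z
  proof -
    have "g \<omega> * z \<le> \<bar>g \<omega>\<bar> * \<bar>z\<bar>" by (metis abs_ge_self abs_mult)
    also have "\<dots> \<le> G * c" using gG[OF that(1)] that(2) G0 by (intro mult_mono) auto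
    finally show ?thesis unfolding E0_def by simp
  qed
  have dAE': "AE \<omega> in M. \<bar>dl \<omega>\<bar> \<le> c"
    using dAE AE_space
  proof eventually_elim
    case (elim \<omega>) then show ?case using Ab[OF elim(2)] by auto
  qed
  have ab_bnd: "\<bar>\<alpha> \<omega>\<bar> \<le> 2 * E0 \<and> \<bar>\<beta> \<omega>\<bar> \<le> 2 * E0 / c" if w: "\<omega> \<in> space M" for \<omega>
  proof -
    have A1: "\<bar>A \<omega>\<bar> \<le> c" "\<bar>A \<omega> + c\<bar> \<le> c" using Ab[OF w] by auto
    have e1: "exp (g \<omega>*A \<omega>) \<le> E0" by (rule eb[OF w A1(1)])
    have e2: "exp (g \<omega>*(A \<omega>+c)) \<le> E0" by (rule eb[OF w A1(2)])
    have "\<bar>(A \<omega>+c) * exp (g \<omega>*A \<omega>) - A \<omega> * exp (g \<omega>*(A \<omega>+c))\<bar>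
        \<le> \<bar>A \<omega>+c\<bar> * exp (g \<omega>*A \<omega>) + \<bar>A \<omega>\<bar> * exp (g \<omega>*(A \<omega>+c))"
      by (rule order_trans[OF abs_triangle_ineq4]) (simp add: abs_mult)
    also have "\<dots> \<le> c * E0 + c * E0" using A1 e1 e2 by (intro add_mono mult_mono) auto
    finally have 1: "\<bar>(A \<omega>+c) * exp (g \<omega>*A \<omega>) - A \<omega> * exp (g \<omega>*(A \<omega>+c))\<bar> \<le> 2 * E0 * c" by simp
    have 2: "\<bar>exp (g \<omega>*(A \<omega>+c)) - exp (g \<omega>*A \<omega>)\<bar> \<le> 2 * E0" using e1 e2 exp_gt_zero[of "g \<omega>*A \<omega>"] exp_gt_zero[of "g \<omega>*(A \<omega>+c)"] unfolding abs_le_iff by linarith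
    show ?thesis using 1 2 c unfolding \<alpha>_def \<beta>_def by (simp add: abs_divide field_simps)
  qed
  have int1: "integrable M (\<lambda>\<omega>. Y \<omega> * exp (g \<omega> * dl \<omega>))"
  proof (rule integrable_const_bound[where B="K * E0"])
    show "AE \<omega> in M. norm (Y \<omega> * exp (g \<omega> * dl \<omega>)) \<le> K * E0"
      using YK dAE' AE_space
    proof eventually_elim
      case (elim \<omega>)
      have "Y \<omega> * exp (g \<omega> * dl \<omega>) \<le> K * E0" using eb[OF elim(3) elim(2)] elim Y0[OF elim(3)] by (intro mult_mono) auto
      then show ?case using Y0[OF elim(3)] by simp
    qed
  qed measurable
  have int2: "integrable M (\<lambda>\<omega>. Y \<omega> * \<alpha> \<omega>)"
  proof (rule integrable_const_bound[where B="K * (2*E0)"])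
    show "AE \<omega> in M. norm (Y \<omega> * \<alpha> \<omega>) \<le> K * (2*E0)"
      using YK AE_space
    proof eventually_elim
      case (elim \<omega>)
      have "\<bar>Y \<omega>\<bar> * \<bar>\<alpha> \<omega>\<bar> \<le> K * (2*E0)" using ab_bnd[OF elim(2)] elim Y0[OF elim(2)] by (intro mult_mono) auto
      then show ?case by (simp add: abs_mult)
    qed
  qed measurable
  have int3: "integrable M (\<lambda>\<omega>. (Y \<omega> * \<beta> \<omega>) * dl \<omega>)"
  proof (rule integrable_const_bound[where B="K * (2*E0/c) * c"])
    show "AE \<omega> in M. norm ((Y \<omega> * \<beta> \<omega>) * dl \<omega>) \<le> K * (2*E0/c) * c"
      using YK dAE' AE_space
    proof eventually_elim
      case (elim \<omega>)
      have "\<bar>Y \<omega>\<bar> * \<bar>\<beta> \<omega>\<bar> * \<bar>dl \<omega>\<bar> \<le> K * (2*E0/c) * c"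
        using ab_bnd[OF elim(3)] elim Y0[OF elim(3)] by (intro mult_mono) auto
      then show ?case by (simp add: abs_mult)
    qed
  qed measurable
  have intY: "integrable M Y"
  proof (rule integrable_const_bound[where B="K"])
    show "AE \<omega> in M. norm (Y \<omega>) \<le> K" using YK AE_space by eventually_elim (use Y0 in auto)
  qed measurable
  have "(\<integral>\<omega>. Y \<omega> * exp (g \<omega> * dl \<omega>) \<partial>M) \<le> (\<integral>\<omega>. Y \<omega> * \<alpha> \<omega> + (Y \<omega> * \<beta> \<omega>) * dl \<omega> \<partial>M)"
  proof (rule integral_mono_AE[OF int1])
    show "integrable M (\<lambda>\<omega>. Y \<omega> * \<alpha> \<omega> + (Y \<omega> * \<beta> \<omega>) * dl \<omega>)" using int2 int3 by simp
    show "AE \<omega> in M. Y \<omega> * exp (g \<omega> * dl \<omega>) \<le> Y \<omega> * \<alpha> \<omega> + (Y \<omega> * \<beta> \<omega>) * dl \<omega>"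
      using dAE AE_space
    proof eventually_elim
      case (elim \<omega>)
      have "exp (g \<omega> * dl \<omega>) \<le> \<alpha> \<omega> + \<beta> \<omega> * dl \<omega>"
        unfolding \<alpha>_def \<beta>_def by (rule exp_chord[OF c]) (use elim in auto)
      then have "Y \<omega> * exp (g \<omega> * dl \<omega>) \<le> Y \<omega> * (\<alpha> \<omega> + \<beta> \<omega> * dl \<omega>)"
        using Y0[OF elim(2)] by (intro mult_left_mono)
      then show ?case by (simp add: algebra_simps)
    qed
  qed
  also have "\<dots> = (\<integral>\<omega>. Y \<omega> * \<alpha> \<omega> \<partial>M) + (\<integral>\<omega>. (Y \<omega> * \<beta> \<omega>) * dl \<omega> \<partial>M)"
    using int2 int3 by simp
  also have "(\<integral>\<omega>. (Y \<omega> * \<beta> \<omega>) * dl \<omega> \<partial>M) = (\<integral>\<omega>. (Y \<omega> * \<beta> \<omega>) * real_cond_exp M F dl \<omega> \<partial>M)"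
    by (rule S.real_cond_exp_intg(2)[symmetric, OF int3 bmF dm])
  also have "\<dots> = 0"
  proof -
    have "(\<integral>\<omega>. (Y \<omega> * \<beta> \<omega>) * real_cond_exp M F dl \<omega> \<partial>M) = (\<integral>\<omega>. 0 \<partial>M)"
      by (rule integral_cong_AE) (use ce in \<open>auto\<close>)
    then show ?thesis by simp
  qed
  also have "(\<integral>\<omega>. Y \<omega> * \<alpha> \<omega> \<partial>M) \<le> (\<integral>\<omega>. Y \<omega> * exp (G^2*c^2/8) \<partial>M)"
  proof (rule integral_mono[OF int2])
    show "integrable M (\<lambda>\<omega>. Y \<omega> * exp (G^2*c^2/8))" using intY by simp
    fix \<omega> assume w: "\<omega> \<in> space M"
    have "\<alpha> \<omega> \<le> exp (g \<omega>^2*c^2/8)" unfolding \<alpha>_def by (rule hoeff_det[OF c]) (use Ab[OF w] in auto)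
    also have "\<dots> \<le> exp (G^2*c^2/8)"
    proof -
      have "g \<omega>^2 \<le> G^2" using gG[OF w] by (metis abs_le_square_iff abs_of_nonneg G0)
      then show ?thesis by (simp add: mult_right_mono)
    qed
    finally show "Y \<omega> * \<alpha> \<omega> \<le> Y \<omega> * exp (G^2*c^2/8)" using Y0[OF w] by (rule mult_left_mono)
  qed
  finally show ?thesis by (simp add: mult.commute)
qed


lemma comp_meas_PiM[measurable]: "(\<lambda>y::nat\<Rightarrow>real. y j) \<in> borel_measurable (PiM I (\<lambda>_. (borel::real measure)))"
proof (cases "j \<in> I")
  case True then show ?thesis by (rule measurable_component_singleton)
next
  case False
  have "(\<lambda>y::nat\<Rightarrow>real. undefined::real) \<in> borel_measurable (PiM I (\<lambda>_. (borel::real measure)))" by simp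
  then show ?thesis
    by (rule measurable_cong[THEN iffD1, rotated]) (use False in \<open>auto simp: space_PiM PiE_def extensional_def\<close>)
qed

lemma xpart:
  fixes x :: "nat \<Rightarrow> 'a \<Rightarrow> real"
  assumes P: "prob_space M" and n: "n > 0"
    and ind: "prob_space.indep_vars M (\<lambda>_. borel) x {1..n}"
    and Ex: "\<And>i. i \<in> {1..n} \<Longrightarrow> prob_space.expectation M (x i) = \<mu>"
    and bx: "\<And>i \<omega>. i \<in> {1..n} \<Longrightarrow> \<omega> \<in> space M \<Longrightarrow> \<bar>x i \<omega> - \<mu>\<bar> \<le> Cx"
    and Cx: "Cx > 0" and t: "t > 0"
  shows "measure M {\<omega> \<in> space M. \<exists>k\<le>n. \<bar>\<Sum>q<k. (x (Suc q) \<omega> - \<mu>)\<bar> > t}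
           \<le> 2 * exp (-2*t^2/(real n * (2*Cx)^2))"
proof -
  interpret prob_space M by (rule P)
  have xm[measurable]: "x i \<in> borel_measurable M" if "i \<in> {1..n}" for i
    using ind that unfolding indep_vars_def by auto
  define Xy where "Xy = (\<lambda>(y::nat\<Rightarrow>real) q. y (Suc q) - \<mu>)"
  define stp where "stp = (\<lambda>y q. \<forall>k\<in>{..q}. \<bar>\<Sum>j<k. Xy y j\<bar> \<le> t)"
  define Zy where "Zy = (\<lambda>y q. if stp y q then Xy y q else 0)"
  define Z where "Z = (\<lambda>q \<omega>. Zy (\<lambda>j. x j \<omega>) q)"
  have cong: "stp y q = stp y' q" "Zy y q = Zy y' q"
    if "\<And>j. j < i \<Longrightarrow> y (Suc j) = y' (Suc j)" "q < i" for y y' i q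
  proof -
    have e: "Xy y j = Xy y' j" if "j < i" for j using that \<open>\<And>j. j < i \<Longrightarrow> y (Suc j) = y' (Suc j)\<close> by (simp add: Xy_def)
    show "stp y q = stp y' q" unfolding stp_def
      by (intro ball_cong refl arg_cong2[where f="(\<le>)"] arg_cong[where f=abs] sum.cong) (use e that(2) in auto)
    then show "Zy y q = Zy y' q" unfolding Zy_def using e that(2) by simp
  qed
  have cong': "\<And>y y' i q. (\<And>j. j < i \<Longrightarrow> y (Suc j) = y' (Suc j)) \<Longrightarrow> q < i \<Longrightarrow> Zy y q = Zy y' q"
    using cong(2) by blast
  have stp_le: "stp y i = stp y' i" if "\<And>j. j < i \<Longrightarrow> y (Suc j) = y' (Suc j)" for y y' i
  proof -
    have e: "Xy y j = Xy y' j" if "j < i" for j using that \<open>\<And>j. j < i \<Longrightarrow> y (Suc j) = y' (Suc j)\<close> by (simp add: Xy_def)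
    show ?thesis unfolding stp_def
      by (intro ball_cong refl arg_cong2[where f="(\<le>)"] arg_cong[where f=abs] sum.cong) (use e in auto)
  qed
  have Zm[measurable]: "Z q \<in> borel_measurable M" if "q < n" for q
  proof -
    have [measurable]: "x j \<in> borel_measurable M" if "j \<le> Suc q" "j \<ge> 1" for j using xm that \<open>q<n\<close> by auto
    have "Z q = (\<lambda>\<omega>. if (\<forall>k\<in>{..q}. \<bar>\<Sum>j<k. x (Suc j) \<omega> - \<mu>\<bar> \<le> t) then x (Suc q) \<omega> - \<mu> else 0)"
      unfolding Z_def Zy_def stp_def Xy_def by simp
    also have "\<dots> \<in> borel_measurable M"
    proof -
      have s: "(\<lambda>\<omega>. \<Sum>j<k. x (Suc j) \<omega> - \<mu>) \<in> borel_measurable M" if "k \<in> {..q}" for k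
        by (rule borel_measurable_sum) (use that in \<open>auto intro!: borel_measurable_diff xm\<close>)
      have "{\<omega> \<in> space M. \<forall>k\<in>{..q}. \<bar>\<Sum>j<k. x (Suc j) \<omega> - \<mu>\<bar> \<le> t} = (\<Inter>k\<in>{..q}. {\<omega> \<in> space M. \<bar>\<Sum>j<k. x (Suc j) \<omega> - \<mu>\<bar> \<le> t}) \<inter> space M"
        by auto
      also have "\<dots> \<in> sets M" using s by (intro sets.Int sets.finite_INT) (auto intro!: borel_measurable_le borel_measurable_abs)
      finally have "{\<omega> \<in> space M. \<forall>k\<in>{..q}. \<bar>\<Sum>j<k. x (Suc j) \<omega> - \<mu>\<bar> \<le> t} \<in> sets M" .
      then show ?thesis by (intro measurable_If) (auto intro!: borel_measurable_diff xm simp: \<open>q<n\<close>)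
    qed
    finally show ?thesis .
  qed
  have Zb: "\<bar>Z q \<omega>\<bar> \<le> Cx" if "q < n" "\<omega> \<in> space M" for q \<omega>
    using bx[of "Suc q" \<omega>] that Cx by (simp add: Z_def Zy_def Xy_def)
  have main: "measure M {\<omega> \<in> space M. \<bar>\<Sum>i<n. Z i \<omega>\<bar> > t} \<le> 2 * exp (-2*t^2/(real n * (2*Cx)^2))"
  proof (rule chernoff2[OF P n _ t Zm])
    show "2*Cx > 0" using Cx by simp
    show "AE \<omega> in M. \<bar>Z i \<omega>\<bar> \<le> Cx" if "i < n" for i using Zb that by (intro AE_I2) auto
    fix i l assume i: "i < n"
    show "(\<integral>\<omega>. exp (l * (\<Sum>j<i. Z j \<omega>)) * exp (l * Z i \<omega>) \<partial>M)
              \<le> exp (l^2*(2*Cx)^2/8) * (\<integral>\<omega>. exp (l * (\<Sum>j<i. Z j \<omega>)) \<partial>M)"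
    proof -
      define st where "st = (\<lambda>\<omega>. stp (\<lambda>j. x j \<omega>) i)"
      define G where "G = (\<lambda>\<omega>. exp (l * (\<Sum>j<i. Z j \<omega>)) * (if st \<omega> then 1 else 0))"
      define H where "H = (\<lambda>\<omega>. exp (l * (x (Suc i) \<omega> - \<mu>)))"
      define \<Phi> where "\<Phi> = exp (l^2*(2*Cx)^2/8)"
      have \<Phi>1: "\<Phi> \<ge> 1" unfolding \<Phi>_def by simp
      have xSi[measurable]: "x (Suc i) \<in> borel_measurable M" using i by (intro xm) auto
      have stm: "{\<omega> \<in> space M. st \<omega>} \<in> sets M"
      proof -
        have [measurable]: "x j \<in> borel_measurable M" if "j \<le> Suc i" "j \<ge> 1" for j using xm that i by auto
        have s: "(\<lambda>\<omega>. \<Sum>j<k. x (Suc j) \<omega> - \<mu>) \<in> borel_measurable M" if "k \<in> {..i}" for k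
          by (rule borel_measurable_sum) (use that i in \<open>auto intro!: borel_measurable_diff xm\<close>)
        have "{\<omega> \<in> space M. st \<omega>} = (\<Inter>k\<in>{..i}. {\<omega> \<in> space M. \<bar>\<Sum>j<k. x (Suc j) \<omega> - \<mu>\<bar> \<le> t}) \<inter> space M"
          unfolding st_def stp_def Xy_def by auto
        also have "\<dots> \<in> sets M" using s by (intro sets.Int sets.finite_INT) (auto intro!: borel_measurable_le borel_measurable_abs)
        finally show ?thesis .
      qed
      have Sm[measurable]: "(\<lambda>\<omega>. \<Sum>j<i. Z j \<omega>) \<in> borel_measurable M"
        by (rule borel_measurable_sum) (use Zm i in auto)
      have Gm[measurable]: "G \<in> borel_measurable M" unfolding G_def
        by (intro borel_measurable_times measurable_If) (use stm in auto)
      have Hm[measurable]: "H \<in> borel_measurable M" unfolding H_def by measurable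
      have Sb: "\<bar>\<Sum>j<i. Z j \<omega>\<bar> \<le> real i * Cx" if "\<omega> \<in> space M" for \<omega>
      proof -
        have "\<bar>\<Sum>j<i. Z j \<omega>\<bar> \<le> (\<Sum>j<i. \<bar>Z j \<omega>\<bar>)" by (rule sum_abs)
        also have "\<dots> \<le> (\<Sum>j<i. Cx)" by (rule sum_mono) (use Zb that i in auto)
        finally show ?thesis by simp
      qed
      have expb: "exp (l * z) \<le> exp (\<bar>l\<bar> * B)" if "\<bar>z\<bar> \<le> B" for z B
      proof -
        have "l * z \<le> \<bar>l\<bar> * \<bar>z\<bar>" by (metis abs_ge_self abs_mult)
        also have "\<dots> \<le> \<bar>l\<bar> * B" using that by (intro mult_left_mono) auto
        finally show ?thesis by simp
      qed
      have intE: "integrable M (\<lambda>\<omega>. exp (l * (\<Sum>j<i. Z j \<omega>)))"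
        by (rule integrable_const_bound[where B="exp (\<bar>l\<bar> * (real i * Cx))"]) (use Sb expb in \<open>auto intro!: AE_I2\<close>)
      have intG: "integrable M G"
      proof (rule integrable_const_bound[where B="exp (\<bar>l\<bar> * (real i * Cx))"])
        show "AE \<omega> in M. norm (G \<omega>) \<le> exp (\<bar>l\<bar> * (real i * Cx))"
          by (intro AE_I2) (use Sb expb in \<open>auto simp: G_def\<close>)
      qed (rule Gm)
      have intH: "integrable M H"
      proof (rule integrable_const_bound[where B="exp (\<bar>l\<bar> * Cx)"])
        show "AE \<omega> in M. norm (H \<omega>) \<le> exp (\<bar>l\<bar> * Cx)"
          by (intro AE_I2) (use bx[of "Suc i"] i expb in \<open>auto simp: H_def\<close>)
      qed (rule Hm)
      have eq1: "exp (l * (\<Sum>j<i. Z j \<omega>)) * exp (l * Z i \<omega>) = (exp (l * (\<Sum>j<i. Z j \<omega>)) - G \<omega>) + G \<omega> * H \<omega>" for \<omega>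
        unfolding G_def H_def Z_def Zy_def st_def Xy_def by simp
      have indep: "(\<integral>\<omega>. G \<omega> * H \<omega> \<partial>M) = (\<integral>\<omega>. G \<omega> \<partial>M) * (\<integral>\<omega>. H \<omega> \<partial>M)"
        and intGH: "integrable M (\<lambda>\<omega>. G \<omega> * H \<omega>)"
      proof -
        define gfun where "gfun = (\<lambda>y. exp (l * (\<Sum>j<i. Zy y j)) * (if stp y i then 1 else (0::real)))"
        define hfun where "hfun = (\<lambda>z::nat\<Rightarrow>real. exp (l * (z (Suc i) - \<mu>)))"
        have gm: "gfun \<in> borel_measurable (PiM {1..i} (\<lambda>_. borel))"
          unfolding gfun_def Zy_def stp_def Xy_def by measurable
        have hm: "hfun \<in> borel_measurable (PiM {Suc i} (\<lambda>_. borel))"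
          unfolding hfun_def by measurable
        have IV: "indep_var (PiM {1..i} (\<lambda>_. borel)) (\<lambda>\<omega>. restrict (\<lambda>j. x j \<omega>) {1..i})
                            (PiM {Suc i} (\<lambda>_. borel)) (\<lambda>\<omega>. restrict (\<lambda>j. x j \<omega>) {Suc i})"
          by (rule indep_var_restrict[OF ind]) (use i in auto)
        note IV2 = indep_var_compose[OF IV gm hm]
        have eG: "(gfun \<circ> (\<lambda>\<omega>. restrict (\<lambda>j. x j \<omega>) {1..i})) = G"
        proof
          fix \<omega>
          have c1: "restrict (\<lambda>j. x j \<omega>) {1..i} (Suc j) = x (Suc j) \<omega>" if "j < i" for j using that by simp
          have "(\<Sum>j<i. Zy (restrict (\<lambda>j. x j \<omega>) {1..i}) j) = (\<Sum>j<i. Zy (\<lambda>j. x j \<omega>) j)"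
            by (rule sum.cong[OF refl], rule cong', rule c1, auto)
          moreover have "stp (restrict (\<lambda>j. x j \<omega>) {1..i}) i = stp (\<lambda>j. x j \<omega>) i"
            by (rule stp_le, rule c1, assumption)
          ultimately show "(gfun \<circ> (\<lambda>\<omega>. restrict (\<lambda>j. x j \<omega>) {1..i})) \<omega> = G \<omega>"
            unfolding gfun_def G_def st_def Z_def by simp
        qed
        have eH: "(hfun \<circ> (\<lambda>\<omega>. restrict (\<lambda>j. x j \<omega>) {Suc i})) = H"
          by (rule ext) (simp add: hfun_def H_def)
        have IV3: "indep_var borel G borel H" using IV2 unfolding eG eH .
        show "(\<integral>\<omega>. G \<omega> * H \<omega> \<partial>M) = (\<integral>\<omega>. G \<omega> \<partial>M) * (\<integral>\<omega>. H \<omega> \<partial>M)"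
          by (rule indep_var_lebesgue_integral[OF IV3 intG intH])
        show "integrable M (\<lambda>\<omega>. G \<omega> * H \<omega>)"
          by (rule indep_var_integrable[OF IV3 intG intH])
      qed
      have EH: "(\<integral>\<omega>. H \<omega> \<partial>M) \<le> \<Phi>"
      proof -
        define \<alpha> where "\<alpha> = ((-Cx+2*Cx) * exp (l*(-Cx)) - (-Cx) * exp (l*(-Cx+2*Cx))) / (2*Cx)"
        define \<beta> where "\<beta> = (exp (l*(-Cx+2*Cx)) - exp (l*(-Cx))) / (2*Cx)"
        have intx: "integrable M (x (Suc i))"
        proof (rule integrable_const_bound[where B="\<bar>\<mu>\<bar> + Cx"])
          show "AE \<omega> in M. norm (x (Suc i) \<omega>) \<le> \<bar>\<mu>\<bar> + Cx"
            by (intro AE_I2) (use bx[of "Suc i"] i in \<open>force simp: abs_le_iff\<close>)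
        qed (rule xSi)
        have "(\<integral>\<omega>. H \<omega> \<partial>M) \<le> (\<integral>\<omega>. \<alpha> + \<beta> * (x (Suc i) \<omega> - \<mu>) \<partial>M)"
        proof (rule integral_mono[OF intH])
          show "integrable M (\<lambda>\<omega>. \<alpha> + \<beta> * (x (Suc i) \<omega> - \<mu>))" using intx by auto
          fix \<omega> assume w: "\<omega> \<in> space M"
          show "H \<omega> \<le> \<alpha> + \<beta> * (x (Suc i) \<omega> - \<mu>)"
            unfolding H_def \<alpha>_def \<beta>_def
            by (rule exp_chord) (use Cx bx[OF _ w, of "Suc i"] i in \<open>auto simp: abs_le_iff\<close>)
        qed
        also have "\<dots> = \<alpha>"
          using intx Ex[of "Suc i"] i by (simp add: prob_space)
        also have "\<alpha> \<le> \<Phi>" unfolding \<alpha>_def \<Phi>_def by (rule hoeff_det) (use Cx in auto)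
        finally show ?thesis .
      qed
      have G0: "G \<omega> \<ge> 0" for \<omega> unfolding G_def by simp
      have GE: "G \<omega> \<le> exp (l * (\<Sum>j<i. Z j \<omega>))" for \<omega> unfolding G_def by simp
      have "(\<integral>\<omega>. exp (l * (\<Sum>j<i. Z j \<omega>)) * exp (l * Z i \<omega>) \<partial>M)
          = (\<integral>\<omega>. (exp (l * (\<Sum>j<i. Z j \<omega>)) - G \<omega>) + G \<omega> * H \<omega> \<partial>M)"
        unfolding eq1 ..
      also have "\<dots> = (\<integral>\<omega>. exp (l * (\<Sum>j<i. Z j \<omega>)) - G \<omega> \<partial>M) + (\<integral>\<omega>. G \<omega> \<partial>M) * (\<integral>\<omega>. H \<omega> \<partial>M)"
        using intE intG intGH indep by simp
      also have "\<dots> \<le> \<Phi> * (\<integral>\<omega>. exp (l * (\<Sum>j<i. Z j \<omega>)) - G \<omega> \<partial>M) + \<Phi> * (\<integral>\<omega>. G \<omega> \<partial>M)"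
      proof (intro add_mono)
        have "0 \<le> (\<integral>\<omega>. exp (l * (\<Sum>j<i. Z j \<omega>)) - G \<omega> \<partial>M)"
          by (rule integral_nonneg_AE) (use GE in \<open>auto intro!: AE_I2\<close>)
        then show "(\<integral>\<omega>. exp (l * (\<Sum>j<i. Z j \<omega>)) - G \<omega> \<partial>M) \<le> \<Phi> * (\<integral>\<omega>. exp (l * (\<Sum>j<i. Z j \<omega>)) - G \<omega> \<partial>M)"
          using \<Phi>1 by (simp add: mult_le_cancel_right1)
        have iG0: "0 \<le> (\<integral>\<omega>. G \<omega> \<partial>M)" by (rule integral_nonneg_AE) (use G0 in auto)
        show "(\<integral>\<omega>. G \<omega> \<partial>M) * (\<integral>\<omega>. H \<omega> \<partial>M) \<le> \<Phi> * (\<integral>\<omega>. G \<omega> \<partial>M)"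
          using mult_right_mono[OF EH iG0] by (simp add: mult.commute)
      qed
      also have "\<dots> = \<Phi> * (\<integral>\<omega>. exp (l * (\<Sum>j<i. Z j \<omega>)) \<partial>M)"
        using intE intG by (simp add: distrib_left[symmetric])
      finally show ?thesis unfolding \<Phi>_def .
    qed
  qed
  have "{\<omega> \<in> space M. \<exists>k\<le>n. \<bar>\<Sum>q<k. (x (Suc q) \<omega> - \<mu>)\<bar> > t} \<subseteq> {\<omega> \<in> space M. \<bar>\<Sum>i<n. Z i \<omega>\<bar> > t}"
  proof safe
    fix \<omega> k assume "\<omega> \<in> space M" "k \<le> n" "\<bar>\<Sum>q<k. (x (Suc q) \<omega> - \<mu>)\<bar> > t"
    from stop_sum[of t k n "\<lambda>q. x (Suc q) \<omega> - \<mu>", OF _ this(2,3)] t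
    show "\<bar>\<Sum>i<n. Z i \<omega>\<bar> > t" unfolding Z_def Zy_def stp_def Xy_def by simp
  qed
  moreover have "{\<omega> \<in> space M. \<bar>\<Sum>i<n. Z i \<omega>\<bar> > t} \<in> sets M"
  proof -
    have "(\<lambda>\<omega>. \<Sum>i<n. Z i \<omega>) \<in> borel_measurable M" by (rule borel_measurable_sum) (use Zm in auto)
    then show ?thesis by measurable
  qed
  ultimately show ?thesis using main by (meson finite_measure_mono order_trans)
qed


lemma info_alg_facts:
  fixes M :: "'a measure" and x d :: "nat \<Rightarrow> 'a \<Rightarrow> real"
  assumes xm: "\<And>i. i \<in> {1..n} \<Longrightarrow> x i \<in> borel_measurable M"
    and dm: "\<And>j. j \<in> {2..<k} \<Longrightarrow> d j \<in> borel_measurable M"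
  shows "space (info_alg M x d n k) = space M"
    and "sets (info_alg M x d n k) \<subseteq> sets M"
    and "subalgebra M (info_alg M x d n k)"
    and "\<And>i. i \<in> {1..n} \<Longrightarrow> x i \<in> borel_measurable (info_alg M x d n k)"
    and "\<And>j. j \<in> {2..<k} \<Longrightarrow> d j \<in> borel_measurable (info_alg M x d n k)"
proof -
  define Gen where "Gen = {d i -` B \<inter> space M | i B. i \<in> {2..<k} \<and> B \<in> sets borel} \<union>
      {x i -` B \<inter> space M | i B. i \<in> {1..n} \<and> B \<in> sets borel}"
  have eq: "info_alg M x d n k = sigma (space M) Gen" unfolding info_alg_def Gen_def ..
  have GP: "Gen \<subseteq> Pow (space M)" unfolding Gen_def by auto
  have GS: "Gen \<subseteq> sets M" unfolding Gen_def using xm dm by (auto intro!: measurable_sets)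
  show sp: "space (info_alg M x d n k) = space M" unfolding eq using GP by simp
  have se: "sets (info_alg M x d n k) = sigma_sets (space M) Gen" unfolding eq using GP by simp
  show ss: "sets (info_alg M x d n k) \<subseteq> sets M" unfolding se by (rule sets.sigma_sets_subset[OF GS])
  show "subalgebra M (info_alg M x d n k)" unfolding subalgebra_def using sp ss by simp
  show "x i \<in> borel_measurable (info_alg M x d n k)" if "i \<in> {1..n}" for i
  proof (rule measurableI)
    fix B :: "real set" assume "B \<in> sets borel"
    then have "x i -` B \<inter> space M \<in> Gen" unfolding Gen_def using that by blast
    then show "x i -` B \<inter> space (info_alg M x d n k) \<in> sets (info_alg M x d n k)"
      unfolding sp se by auto
  qed simp
  show "d j \<in> borel_measurable (info_alg M x d n k)" if "j \<in> {2..<k}" for j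
  proof (rule measurableI)
    fix B :: "real set" assume "B \<in> sets borel"
    then have "d j -` B \<inter> space M \<in> Gen" unfolding Gen_def using that by blast
    then show "d j -` B \<inter> space (info_alg M x d n k) \<in> sets (info_alg M x d n k)"
      unfolding sp se by auto
  qed simp
qed


lemma dpart:
  fixes M :: "'a measure" and x d a b V :: "nat \<Rightarrow> 'a \<Rightarrow> real"
  assumes P: "prob_space M" and n: "n \<ge> 2"
    and xm: "\<And>i. i \<in> {1..n} \<Longrightarrow> x i \<in> borel_measurable M"
    and dm: "\<And>k. k \<in> {2..n} \<Longrightarrow> d k \<in> borel_measurable M"
    and ce: "\<And>k. k \<in> {2..n} \<Longrightarrow> AE \<omega> in M. real_cond_exp M (info_alg M x d n k) (d k) \<omega> = 0"
    and am: "\<And>k. k \<in> {2..n} \<Longrightarrow> a k \<in> borel_measurable (info_alg M x d n k)"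
    and bm: "\<And>k. k \<in> {2..n} \<Longrightarrow> b k \<in> borel_measurable (info_alg M x d n k)"
    and ab: "\<And>k \<omega>. k \<in> {2..n} \<Longrightarrow> \<omega> \<in> space M \<Longrightarrow> a k \<omega> \<le> d k \<omega> \<and> d k \<omega> \<le> b k \<omega>"
    and abu: "\<And>k \<omega>. k \<in> {2..n} \<Longrightarrow> \<omega> \<in> space M \<Longrightarrow> b k \<omega> - a k \<omega> \<le> 2 * u"
    and u: "u > 0"
    and Vm: "\<And>k m. k \<in> {2..n} \<Longrightarrow> 1 \<le> m \<Longrightarrow> m < k \<Longrightarrow> V m \<in> borel_measurable (info_alg M x d n k)"
    and W: "W > 0" and t: "t > 0"
  shows "measure M {\<omega> \<in> space M. \<exists>k \<le> n-1. \<bar>\<Sum>q<k. (V (Suc q) \<omega> * (if \<bar>V (Suc q) \<omega>\<bar> \<le> W then 1 else 0)) * d (Suc (Suc q)) \<omega>\<bar> > t}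
           \<le> 2 * exp (-2*t^2/(real (n-1) * (2*u*W)^2))"
proof -
  interpret prob_space M by (rule P)
  define F where "F = (\<lambda>k. info_alg M x d n k)"
  define w where "w = (\<lambda>q \<omega>. V (Suc q) \<omega> * (if \<bar>V (Suc q) \<omega>\<bar> \<le> W then 1 else (0::real)))"
  define X where "X = (\<lambda>q \<omega>. w q \<omega> * d (Suc (Suc q)) \<omega>)"
  define stp where "stp = (\<lambda>q \<omega>. \<forall>k\<in>{..q}. \<bar>\<Sum>j<k. X j \<omega>\<bar> \<le> t)"
  define Z where "Z = (\<lambda>q \<omega>. if stp q \<omega> then X q \<omega> else 0)"
  have Fk: "space (F k) = space M" "subalgebra M (F k)" "\<And>j. j \<in> {2..<k} \<Longrightarrow> d j \<in> borel_measurable (F k)"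
    if "k \<le> n + 1" for k
  proof -
    have dmk: "\<And>j. j \<in> {2..<k} \<Longrightarrow> d j \<in> borel_measurable M" using dm that by auto
    note I = info_alg_facts[of n x M k d, OF xm dmk]
    show "space (F k) = space M" unfolding F_def by (rule I(1))
    show "subalgebra M (F k)" unfolding F_def by (rule I(3))
    show "\<And>j. j \<in> {2..<k} \<Longrightarrow> d j \<in> borel_measurable (F k)" unfolding F_def by (rule I(5))
  qed
  have SF: "sigma_finite_subalgebra M (F k)" if "k \<le> n+1" for k
  proof -
    have "finite_measure_subalgebra M (F k)"
      unfolding finite_measure_subalgebra_def finite_measure_subalgebra_axioms_def
      using Fk(2)[OF that] by (simp add: finite_measure_axioms)
    then show ?thesis by (rule finite_measure_subalgebra_is_sigma_finite)
  qed
  have sgn: "AE \<omega> in M. a k \<omega> \<le> 0 \<and> 0 \<le> b k \<omega>" if k: "k \<in> {2..n}" for k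
  proof -
    have kn: "k \<le> n+1" using k by simp
    show ?thesis using sign_ae[OF SF[OF kn, unfolded F_def] dm[OF k] am[OF k] bm[OF k] ab[OF k] ce[OF k]] .
  qed
  have dbnd: "AE \<omega> in M. \<bar>d k \<omega>\<bar> \<le> 2*u" if k: "k \<in> {2..n}" for k
    using sgn[OF k] AE_space
  proof eventually_elim
    case (elim \<omega>) then show ?case using ab[OF k elim(2)] abu[OF k elim(2)] by auto
  qed
  have wb: "\<bar>w q \<omega>\<bar> \<le> W" for q \<omega> unfolding w_def using W by auto
  have Xgen: "X i \<in> borel_measurable N"
    if wN: "\<And>j. j < J \<Longrightarrow> w j \<in> borel_measurable N"
      and dN: "\<And>j. j < J \<Longrightarrow> d (Suc (Suc j)) \<in> borel_measurable N" and iJ: "i < J"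
    for N J i
    unfolding X_def using wN[OF iJ] dN[OF iJ] by measurable
  have stpgen: "{\<omega> \<in> space N. stp i \<omega>} \<in> sets N"
    if wN: "\<And>j. j < J \<Longrightarrow> w j \<in> borel_measurable N"
      and dN: "\<And>j. j < J \<Longrightarrow> d (Suc (Suc j)) \<in> borel_measurable N" and iJ: "i \<le> J"
    for N J i
  proof -
    have s: "(\<lambda>\<omega>. \<Sum>j<k. X j \<omega>) \<in> borel_measurable N" if "k \<in> {..i}" for k
      by (rule borel_measurable_sum) (use that iJ Xgen[OF wN dN] in auto)
    have "{\<omega> \<in> space N. stp i \<omega>} = (\<Inter>k\<in>{..i}. {\<omega> \<in> space N. \<bar>\<Sum>j<k. X j \<omega>\<bar> \<le> t}) \<inter> space N"
      unfolding stp_def by auto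
    also have "\<dots> \<in> sets N" using s by (intro sets.Int sets.finite_INT) (auto intro!: borel_measurable_le borel_measurable_abs)
    finally show ?thesis .
  qed
  have Zgen: "Z i \<in> borel_measurable N"
    if wN: "\<And>j. j < J \<Longrightarrow> w j \<in> borel_measurable N"
      and dN: "\<And>j. j < J \<Longrightarrow> d (Suc (Suc j)) \<in> borel_measurable N" and iJ: "i < J"
    for N J i
  proof -
    have "{\<omega> \<in> space N. stp i \<omega>} \<in> sets N" by (rule stpgen[OF wN dN less_imp_le[OF iJ]])
    then show ?thesis unfolding Z_def by (intro measurable_If Xgen[OF wN dN iJ] borel_measurable_const)
  qed
  have wF: "w j \<in> borel_measurable (F k)" if "k \<in> {2..n}" "Suc j < k" for j k
    unfolding w_def using Vm[OF that(1), of "Suc j"] that unfolding F_def by measurable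
  have wM: "w j \<in> borel_measurable M" if "j < n - 1" for j
  proof -
    have kk: "Suc (Suc j) \<in> {2..n}" using that by auto
    have "subalgebra M (F (Suc (Suc j)))" by (rule Fk(2)) (use kk in simp)
    then show ?thesis by (rule measurable_from_subalg) (rule wF[OF kk], simp)
  qed
  have ZM: "Z j \<in> borel_measurable M" if "j < n - 1" for j
    by (rule Zgen[of "n-1"]) (use wM dm that in auto)
  have Zb: "AE \<omega> in M. \<bar>Z q \<omega>\<bar> \<le> W * (2*u)" if "q < n - 1" for q
    using dbnd[of "Suc (Suc q)"] that
  proof -
    have "AE \<omega> in M. \<bar>d (Suc (Suc q)) \<omega>\<bar> \<le> 2*u" using dbnd[of "Suc (Suc q)"] that by auto
    then show ?thesis
    proof eventually_elim
      case (elim \<omega>)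
      have "\<bar>X q \<omega>\<bar> \<le> W * (2*u)" unfolding X_def abs_mult using wb elim W by (intro mult_mono) auto
      then show ?case unfolding Z_def using W u by auto
    qed
  qed
  have main: "measure M {\<omega> \<in> space M. \<bar>\<Sum>i<n-1. Z i \<omega>\<bar> > t} \<le> 2 * exp (-2*t^2/(real (n-1) * (2*u*W)^2))"
  proof (rule chernoff2[OF P _ _ t ZM Zb])
    show "n - 1 > 0" using n by simp
    show "2*u*W > 0" using u W by simp
    fix q l assume q: "q < n - 1"
    define k where "k = Suc (Suc q)"
    have k: "k \<in> {2..n}" using q n by (auto simp: k_def)
    have kn: "k \<le> n + 1" using k by simp
    define A where "A = (\<lambda>\<omega>. max (-(2*u)) (min 0 (a k \<omega>)))"
    define Y where "Y = (\<lambda>\<omega>. exp (l * (\<Sum>j<q. Z j \<omega>)))"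
    define g where "g = (\<lambda>\<omega>. l * (if stp q \<omega> then 1 else 0) * w q \<omega>)"
    have wFk: "w j \<in> borel_measurable (F k)" if "j < Suc q" for j using wF[OF k, of j] that by (simp add: k_def)
    have dFk: "d (Suc (Suc j)) \<in> borel_measurable (F k)" if "j < q" for j using Fk(3)[OF kn, of "Suc (Suc j)"] that by (simp add: k_def)
    have wFk': "w j \<in> borel_measurable (F k)" if "j < q" for j using wFk that by simp
    have Zk: "Z j \<in> borel_measurable (F k)" if "j < q" for j
      by (rule Zgen[OF wFk' dFk that])
    have stpk: "{\<omega> \<in> space (F k). stp q \<omega>} \<in> sets (F k)"
      by (rule stpgen[OF wFk' dFk order_refl])
    have Sk: "(\<lambda>\<omega>. \<Sum>j<q. Z j \<omega>) \<in> borel_measurable (F k)"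
      by (rule borel_measurable_sum) (use Zk in auto)
    have Ym: "Y \<in> borel_measurable (F k)" unfolding Y_def using Sk by measurable
    have gm: "g \<in> borel_measurable (F k)" unfolding g_def
      by (intro borel_measurable_times borel_measurable_const measurable_If wFk) (use stpk in auto)
    have Am: "A \<in> borel_measurable (F k)" unfolding A_def using am[OF k] unfolding F_def by measurable
    have Ab: "-(2*u) \<le> A \<omega> \<and> A \<omega> \<le> 0" for \<omega> unfolding A_def using u by auto
    have dAE: "AE \<omega> in M. A \<omega> \<le> d k \<omega> \<and> d k \<omega> \<le> A \<omega> + 2*u"
      using sgn[OF k] AE_space
    proof eventually_elim
      case (elim \<omega>)
      have "A \<omega> = a k \<omega>" unfolding A_def using elim(1) abu[OF k elim(2)] by auto
      then show ?case using ab[OF k elim(2)] abu[OF k elim(2)] by auto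
    qed
    have ce': "AE \<omega> in M. real_cond_exp M (F k) (d k) \<omega> = 0" using ce[OF k] unfolding F_def .
    have Y0: "0 \<le> Y \<omega>" for \<omega> unfolding Y_def by simp
    have YK: "AE \<omega> in M. Y \<omega> \<le> exp (\<bar>l\<bar> * (real q * (W*(2*u))))"
    proof -
      have "AE \<omega> in M. \<forall>j\<in>{..<q}. \<bar>Z j \<omega>\<bar> \<le> W*(2*u)"
        by (rule AE_finite_allI) (use Zb q in auto)
      then show ?thesis
      proof eventually_elim
        case (elim \<omega>)
        have "\<bar>\<Sum>j<q. Z j \<omega>\<bar> \<le> (\<Sum>j<q. \<bar>Z j \<omega>\<bar>)" by (rule sum_abs)
        also have "\<dots> \<le> (\<Sum>j<q. W*(2*u))" by (rule sum_mono) (use elim in auto)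
        finally have "\<bar>\<Sum>j<q. Z j \<omega>\<bar> \<le> real q * (W*(2*u))" by simp
        then have "l * (\<Sum>j<q. Z j \<omega>) \<le> \<bar>l\<bar> * (real q * (W*(2*u)))"
          by (rule mul_abs_le)
        then show ?case unfolding Y_def by simp
      qed
    qed
    have gG: "\<bar>g \<omega>\<bar> \<le> \<bar>l\<bar> * W" for \<omega>
      unfolding g_def abs_mult using wb[of q \<omega>] by (auto intro: mult_left_mono)
    have KHc: "(\<integral>\<omega>. Y \<omega> * exp (g \<omega> * d k \<omega>) \<partial>M) \<le> exp ((\<bar>l\<bar> * W)^2*(2*u)^2/8) * (\<integral>\<omega>. Y \<omega> \<partial>M)"
      by (rule KH_core[OF P SF[OF kn] dm[OF k] Am _ Ab dAE ce' Ym Y0 YK gm gG]) (use u in auto)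
    have eq0: "g \<omega> * d k \<omega> = l * Z q \<omega>" for \<omega>
      unfolding g_def Z_def X_def k_def by simp
    have eq2: "(\<bar>l\<bar> * W)^2*(2*u)^2/8 = l^2*(2*u*W)^2/8" by (simp add: power_mult_distrib)
    show "(\<integral>\<omega>. exp (l * (\<Sum>j<q. Z j \<omega>)) * exp (l * Z q \<omega>) \<partial>M)
              \<le> exp (l^2*(2*u*W)^2/8) * (\<integral>\<omega>. exp (l * (\<Sum>j<q. Z j \<omega>)) \<partial>M)"
      using KHc unfolding Y_def eq0 eq2 .
  qed
  have "{\<omega> \<in> space M. \<exists>k \<le> n-1. \<bar>\<Sum>q<k. (V (Suc q) \<omega> * (if \<bar>V (Suc q) \<omega>\<bar> \<le> W then 1 else 0)) * d (Suc (Suc q)) \<omega>\<bar> > t}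
      \<subseteq> {\<omega> \<in> space M. \<bar>\<Sum>i<n-1. Z i \<omega>\<bar> > t}"
  proof safe
    fix \<omega> k assume "\<omega> \<in> space M" "k \<le> n-1"
      "\<bar>\<Sum>q<k. (V (Suc q) \<omega> * (if \<bar>V (Suc q) \<omega>\<bar> \<le> W then 1 else 0)) * d (Suc (Suc q)) \<omega>\<bar> > t"
    then have "\<bar>\<Sum>q<k. X q \<omega>\<bar> > t" unfolding X_def w_def by simp
    from stop_sum[of t k "n-1" "\<lambda>q. X q \<omega>", OF less_imp_le[OF t] \<open>k \<le> n-1\<close> this]
    show "\<bar>\<Sum>i<n-1. Z i \<omega>\<bar> > t" unfolding Z_def stp_def .
  qed
  moreover have "{\<omega> \<in> space M. \<bar>\<Sum>i<n-1. Z i \<omega>\<bar> > t} \<in> sets M"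
  proof -
    have "(\<lambda>\<omega>. \<Sum>i<n-1. Z i \<omega>) \<in> borel_measurable M" by (rule borel_measurable_sum) (use ZM in auto)
    then show ?thesis by measurable
  qed
  ultimately show ?thesis using main by (meson finite_measure_mono order_trans)
qed


fun Gn :: "nat \<Rightarrow> (nat \<Rightarrow> real) \<Rightarrow> (nat \<Rightarrow> real) \<Rightarrow> nat \<Rightarrow> real" where
  "Gn 0 X D m = (\<Sum>p=1..Suc m. X p)"
| "Gn (Suc j) X D m = (\<Sum>q<m-1. Gn j X D (Suc q) * D (Suc (Suc q)))"

definition Eer :: "(nat \<Rightarrow> real) \<Rightarrow> (nat \<Rightarrow> real) \<Rightarrow> nat \<Rightarrow> real" where
  "Eer X D m = rec_sum X D m - (\<Sum>p=1..m. X p)"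

lemma Eer_rec: "Eer X D (Suc (Suc k)) = Eer X D (Suc k) + ((\<Sum>p=1..Suc (Suc k). X p) + Eer X D (Suc k)) * D (Suc (Suc k))"
  unfolding Eer_def by (simp add: algebra_simps)

lemma Eer_sum: "Eer X D (Suc k) = (\<Sum>q<k. ((\<Sum>p=1..Suc (Suc q). X p) + Eer X D (Suc q)) * D (Suc (Suc q)))"
proof (induction k)
  case 0 then show ?case by (simp add: Eer_def)
next
  case (Suc k) then show ?case by (simp add: Eer_rec)
qed

lemma Gn_zero: "m \<le> Suc j \<Longrightarrow> Gn (Suc j) X D m = 0"
proof (induction j arbitrary: m)
  case 0 then show ?case by simp
next
  case (Suc j)
  have "Gn (Suc j) X D (Suc q) = 0" if "q < m - 1" for q using Suc.IH[of "Suc q"] that Suc.prems by simp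
  then show ?case by simp
qed

lemma Eer_Gn: "k \<le> N \<Longrightarrow> Eer X D (Suc k) = (\<Sum>j<N. Gn (Suc j) X D (Suc k))"
proof (induction k arbitrary: N rule: less_induct)
  case (less k)
  have "Eer X D (Suc k) = (\<Sum>q<k. ((\<Sum>p=1..Suc (Suc q). X p) + Eer X D (Suc q)) * D (Suc (Suc q)))"
    by (rule Eer_sum)
  also have "\<dots> = (\<Sum>q<k. Gn 0 X D (Suc q) * D (Suc (Suc q))) + (\<Sum>q<k. Eer X D (Suc q) * D (Suc (Suc q)))"
    by (simp add: distrib_right sum.distrib)
  also have "(\<Sum>q<k. Eer X D (Suc q) * D (Suc (Suc q))) = (\<Sum>q<k. (\<Sum>j<N. Gn (Suc j) X D (Suc q)) * D (Suc (Suc q)))"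
    by (rule sum.cong[OF refl]) (use less in auto)
  also have "\<dots> = (\<Sum>j<N. \<Sum>q<k. Gn (Suc j) X D (Suc q) * D (Suc (Suc q)))"
    by (simp add: sum_distrib_right sum.swap[of _ "{..<k}"])
  also have "\<dots> = (\<Sum>j<N. Gn (Suc (Suc j)) X D (Suc k))" by simp
  also have "(\<Sum>q<k. Gn 0 X D (Suc q) * D (Suc (Suc q))) = Gn (Suc 0) X D (Suc k)" by simp
  also have "Gn (Suc 0) X D (Suc k) + (\<Sum>j<N. Gn (Suc (Suc j)) X D (Suc k)) = (\<Sum>j<Suc N. Gn (Suc j) X D (Suc k))"
    by (simp only: sum.lessThan_Suc_shift)
  also have "\<dots> = (\<Sum>j<N. Gn (Suc j) X D (Suc k))"
  proof -
    have z: "Gn (Suc N) X D (Suc k) = 0" using Gn_zero[of "Suc k" N X D] less.prems by simp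
    show ?thesis unfolding sum.lessThan_Suc z by simp
  qed
  finally show ?case .
qed

lemma det_bound:
  fixes X D Wf :: "nat \<Rightarrow> real" and n :: nat
  assumes n: "n \<ge> 2"
   and B0: "\<And>m. 1 \<le> m \<Longrightarrow> m \<le> n-1 \<Longrightarrow> \<bar>Gn 0 X D m\<bar> \<le> Wf 0"
   and Bj: "\<And>j k. j < n-1 \<Longrightarrow> k \<le> n-1 \<Longrightarrow>
      \<bar>\<Sum>q<k. (Gn j X D (Suc q) * (if \<bar>Gn j X D (Suc q)\<bar> \<le> Wf j then 1 else 0)) * D (Suc (Suc q))\<bar> \<le> Wf (Suc j)"
  shows "\<bar>rec_sum X D n - (\<Sum>p=1..n. X p)\<bar> \<le> (\<Sum>j<n-1. Wf (Suc j))"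
proof -
  have tr: "(\<Sum>q<k. Gn j X D (Suc q) * D (Suc (Suc q))) =
      (\<Sum>q<k. (Gn j X D (Suc q) * (if \<bar>Gn j X D (Suc q)\<bar> \<le> Wf j then 1 else 0)) * D (Suc (Suc q)))"
    if "\<And>q. q < k \<Longrightarrow> \<bar>Gn j X D (Suc q)\<bar> \<le> Wf j" for j k
    by (rule sum.cong[OF refl]) (use that in auto)
  have bound: "\<forall>m. 1 \<le> m \<longrightarrow> m \<le> n-1 \<longrightarrow> \<bar>Gn j X D m\<bar> \<le> Wf j" if "j \<le> n-1" for j
    using that
  proof (induction j)
    case 0 then show ?case using B0 by auto
  next
    case (Suc j)
    show ?case
    proof (intro allI impI)
      fix m assume m: "1 \<le> m" "m \<le> n-1"
      have "Gn (Suc j) X D m = (\<Sum>q<m-1. Gn j X D (Suc q) * D (Suc (Suc q)))" by simp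
      also have "\<dots> = (\<Sum>q<m-1. (Gn j X D (Suc q) * (if \<bar>Gn j X D (Suc q)\<bar> \<le> Wf j then 1 else 0)) * D (Suc (Suc q)))"
        by (rule tr) (use Suc m in auto)
      finally show "\<bar>Gn (Suc j) X D m\<bar> \<le> Wf (Suc j)" using Bj[of j "m-1"] Suc.prems m by simp
    qed
  qed
  have nn: "n = Suc (n-1)" using n by simp
  have "rec_sum X D n - (\<Sum>p=1..n. X p) = Eer X D (Suc (n-1))" unfolding Eer_def using nn by simp
  also have "\<dots> = (\<Sum>j<n-1. Gn (Suc j) X D (Suc (n-1)))" by (rule Eer_Gn) simp
  finally have eq: "rec_sum X D n - (\<Sum>p=1..n. X p) = (\<Sum>j<n-1. Gn (Suc j) X D n)" using nn by simp
  have each: "\<bar>Gn (Suc j) X D n\<bar> \<le> Wf (Suc j)" if j: "j < n-1" for j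
  proof -
    have "Gn (Suc j) X D n = (\<Sum>q<n-1. Gn j X D (Suc q) * D (Suc (Suc q)))" by simp
    also have "\<dots> = (\<Sum>q<n-1. (Gn j X D (Suc q) * (if \<bar>Gn j X D (Suc q)\<bar> \<le> Wf j then 1 else 0)) * D (Suc (Suc q)))"
      by (rule tr) (use bound[of j] j in auto)
    finally show ?thesis using Bj[of j "n-1"] j by simp
  qed
  have "\<bar>\<Sum>j<n-1. Gn (Suc j) X D n\<bar> \<le> (\<Sum>j<n-1. \<bar>Gn (Suc j) X D n\<bar>)" by (rule sum_abs)
  also have "\<dots> \<le> (\<Sum>j<n-1. Wf (Suc j))" by (rule sum_mono) (use each in auto)
  finally show ?thesis unfolding eq .
qed


lemma Gn_meas:
  fixes M :: "'a measure" and x d :: "nat \<Rightarrow> 'a \<Rightarrow> real"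
  assumes xm: "\<And>i. i \<in> {1..n} \<Longrightarrow> x i \<in> borel_measurable M"
    and dm: "\<And>k. k \<in> {2..n} \<Longrightarrow> d k \<in> borel_measurable M"
    and k: "k \<in> {2..n}"
  shows "1 \<le> m \<Longrightarrow> m < k \<Longrightarrow> (\<lambda>\<omega>. Gn j (\<lambda>i. x i \<omega>) (\<lambda>l. d l \<omega>) m) \<in> borel_measurable (info_alg M x d n k)"
proof (induction j arbitrary: m)
  have dmk: "\<And>j. j \<in> {2..<k} \<Longrightarrow> d j \<in> borel_measurable M" using dm k by auto
  note I = info_alg_facts[of n x M k d, OF xm dmk]
  {
    case 0
    show ?case unfolding Gn.simps
      by (rule borel_measurable_sum) (rule I(4), use 0 k in auto)
  next
    case (Suc j)
    show ?case unfolding Gn.simps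
    proof (rule borel_measurable_sum, rule borel_measurable_times)
      fix q assume q: "q \<in> {..<m-1}"
      show "(\<lambda>\<omega>. Gn j (\<lambda>i. x i \<omega>) (\<lambda>l. d l \<omega>) (Suc q)) \<in> borel_measurable (info_alg M x d n k)"
        by (rule Suc.IH) (use q Suc.prems in auto)
      show "(\<lambda>\<omega>. d (Suc (Suc q)) \<omega>) \<in> borel_measurable (info_alg M x d n k)"
        using I(5)[of "Suc (Suc q)"] q Suc.prems by auto
    qed
  }
qed

lemma rec_meas:
  fixes M :: "'a measure" and x d :: "nat \<Rightarrow> 'a \<Rightarrow> real"
  assumes xm: "\<And>i. i \<in> {1..n} \<Longrightarrow> x i \<in> borel_measurable M"
    and dm: "\<And>k. k \<in> {2..n} \<Longrightarrow> d k \<in> borel_measurable M"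
  shows "Suc k \<le> n \<Longrightarrow> (\<lambda>\<omega>. rec_sum (\<lambda>i. x i \<omega>) (\<lambda>l. d l \<omega>) (Suc k)) \<in> borel_measurable M"
proof (induction k)
  case 0 then show ?case using xm[of 1] by simp
next
  case (Suc k)
  have [measurable]: "x (Suc (Suc k)) \<in> borel_measurable M" using xm Suc.prems by auto
  have [measurable]: "d (Suc (Suc k)) \<in> borel_measurable M" using dm Suc.prems by auto
  have [measurable]: "(\<lambda>\<omega>. rec_sum (\<lambda>i. x i \<omega>) (\<lambda>l. d l \<omega>) (Suc k)) \<in> borel_measurable M"
    using Suc by simp
  show ?case by simp
qed

lemma exp_aux:
  fixes n :: nat and \<delta> lam z :: real
  assumes n: "n \<ge> 2" and d: "0 < \<delta>" "\<delta> < 1" and lam: "lam = sqrt (2 * ln (2 * real n / \<delta>))"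
    and z: "z \<ge> lam^2/2"
  shows "2 * exp (-z) \<le> \<delta> / real n"
proof -
  have gt: "2 * real n / \<delta> > 1" using n d by (simp add: field_simps)
  then have lnp: "ln (2 * real n / \<delta>) > 0" by simp
  have "lam^2 = 2 * ln (2 * real n / \<delta>)" unfolding lam using lnp by simp
  then have "lam^2/2 = ln (2 * real n / \<delta>)" by simp
  then have "exp (-z) \<le> exp (- ln (2 * real n / \<delta>))" using z by simp
  also have "\<dots> = \<delta> / (2 * real n)" using gt n d by (simp add: exp_minus)
  finally show ?thesis using n by (simp add: field_simps)
qed

theorem theorem5p1:
  fixes M :: "'a measure" and x d a b :: "nat \<Rightarrow> 'a \<Rightarrow> real"
    and n :: nat and \<mu>x Cx u \<delta> :: real
  assumes "prob_space M"
    and "n \<ge> 2"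
    and "prob_space.indep_vars M (\<lambda>_. borel) x {1..n}"
    and "\<And>i. i \<in> {1..n} \<Longrightarrow> prob_space.expectation M (x i) = \<mu>x"
    and "\<And>i \<omega>. i \<in> {1..n} \<Longrightarrow> \<omega> \<in> space M \<Longrightarrow> \<bar>x i \<omega> - \<mu>x\<bar> \<le> Cx"
    and "\<And>k. k \<in> {2..n} \<Longrightarrow> d k \<in> borel_measurable M"
    and "\<And>k. k \<in> {2..n} \<Longrightarrow> prob_space.expectation M (d k) = 0"
    and "\<And>k. k \<in> {2..n} \<Longrightarrow>
           AE \<omega> in M. real_cond_exp M (info_alg M x d n k) (d k) \<omega> = 0"
    and "\<And>k. k \<in> {2..n} \<Longrightarrow> a k \<in> borel_measurable (info_alg M x d n k)"
    and "\<And>k. k \<in> {2..n} \<Longrightarrow> b k \<in> borel_measurable (info_alg M x d n k)"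
    and "\<And>k \<omega>. k \<in> {2..n} \<Longrightarrow> \<omega> \<in> space M \<Longrightarrow> a k \<omega> \<le> d k \<omega> \<and> d k \<omega> \<le> b k \<omega>"
    and "\<And>k \<omega>. k \<in> {2..n} \<Longrightarrow> \<omega> \<in> space M \<Longrightarrow> b k \<omega> - a k \<omega> \<le> 2 * u"
    and "u > 0"
    and "0 < \<delta>" and "\<delta> < 1"
  shows "measure M {\<omega> \<in> space M.
           \<bar>rec_sum (\<lambda>i. x i \<omega>) (\<lambda>k. d k \<omega>) n - (\<Sum>i=1..n. x i \<omega>)\<bar>
             \<le> (let lam = sqrt (2 * ln (2 * real n / \<delta>)); kap = lam * sqrt (real n) * u
                in (\<Sum>j<n-1. kap ^ j) * (lam * \<bar>\<mu>x\<bar> * real n powr (3/2) + lam^2 * Cx * real n) * u)}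
         \<ge> 1 - \<delta>"
proof -
  note P = assms(1) and n = assms(2) and ind = assms(3) and Ex = assms(4) and bx = assms(5)
    and dm = assms(6) and ce = assms(8) and am = assms(9) and bm = assms(10) and ab = assms(11)
    and abu = assms(12) and u = assms(13) and d0 = assms(14) and d1 = assms(15)
  interpret prob_space M by (rule P)
  have xm: "x i \<in> borel_measurable M" if "i \<in> {1..n}" for i
    using ind that unfolding indep_vars_def by auto
  obtain \<omega>0 where \<omega>0: "\<omega>0 \<in> space M" using not_empty by blast
  have Cx0: "Cx \<ge> 0"
  proof -
    have "\<bar>x 1 \<omega>0 - \<mu>x\<bar> \<le> Cx" using bx[of 1 \<omega>0] \<omega>0 n by simp
    then show ?thesis by linarith
  qed
  define lam where "lam = sqrt (2 * ln (2 * real n / \<delta>))"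
  define kap where "kap = lam * sqrt (real n) * u"
  define S where "S = real n * \<bar>\<mu>x\<bar> + lam * Cx * sqrt (real n)"
  define GW where "GW = (\<lambda>j m \<omega>. Gn j (\<lambda>i. x i \<omega>) (\<lambda>l. d l \<omega>) m)"
  have lnp: "ln (2 * real n / \<delta>) > 0" using n d0 d1 by (simp add: field_simps)
  have lam0: "lam > 0" unfolding lam_def using lnp by simp
  have kap0: "kap > 0" unfolding kap_def using lam0 u n by simp
  have S0: "S \<ge> 0" unfolding S_def using lam0 Cx0 by simp
  define Bx where "Bx = {\<omega> \<in> space M. \<exists>k\<le>n. \<bar>\<Sum>q<k. (x (Suc q) \<omega> - \<mu>x)\<bar> > lam * Cx * sqrt (real n)}"
  define Bd where "Bd = (\<lambda>j. {\<omega> \<in> space M. \<exists>k \<le> n-1. \<bar>\<Sum>q<k. (GW j (Suc q) \<omega> * (if \<bar>GW j (Suc q) \<omega>\<bar> \<le> kap^j*S then 1 else 0)) * d (Suc (Suc q)) \<omega>\<bar> > kap^(Suc j)*S})"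
  define T where "T = {\<omega> \<in> space M.
           \<bar>rec_sum (\<lambda>i. x i \<omega>) (\<lambda>k. d k \<omega>) n - (\<Sum>i=1..n. x i \<omega>)\<bar>
             \<le> (let lam = sqrt (2 * ln (2 * real n / \<delta>)); kap = lam * sqrt (real n) * u
                in (\<Sum>j<n-1. kap ^ j) * (lam * \<bar>\<mu>x\<bar> * real n powr (3/2) + lam^2 * Cx * real n) * u)}"
  have bound_eq: "(let lam = sqrt (2 * ln (2 * real n / \<delta>)); kap = lam * sqrt (real n) * u
                in (\<Sum>j<n-1. kap ^ j) * (lam * \<bar>\<mu>x\<bar> * real n powr (3/2) + lam^2 * Cx * real n) * u)
      = (\<Sum>j<n-1. kap^(Suc j) * S)"
  proof -
    have p: "real n powr (3/2) = real n * sqrt (real n)"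
    proof -
      have "real n powr (3/2) = real n powr (1 + 1/2)" by simp
      also have "\<dots> = real n powr 1 * real n powr (1/2)" by (rule powr_add)
      also have "\<dots> = real n * sqrt (real n)" using n by (simp add: powr_half_sqrt)
      finally show ?thesis .
    qed
    have sq: "sqrt (real n) * sqrt (real n) = real n" by simp
    have h: "(lam * \<bar>\<mu>x\<bar> * real n powr (3/2) + lam^2 * Cx * real n) * u = kap * S"
      unfolding p kap_def S_def by (simp add: algebra_simps power2_eq_square sq)
    have "(\<Sum>j<n-1. kap ^ j) * (lam * \<bar>\<mu>x\<bar> * real n powr (3/2) + lam^2 * Cx * real n) * u
        = (\<Sum>j<n-1. kap ^ j) * ((lam * \<bar>\<mu>x\<bar> * real n powr (3/2) + lam^2 * Cx * real n) * u)"
      by (simp only: mult.assoc)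
    also have "\<dots> = (\<Sum>j<n-1. kap ^ j) * (kap * S)" unfolding h ..
    also have "\<dots> = (\<Sum>j<n-1. kap ^ j * (kap * S))" by (rule sum_distrib_right)
    also have "\<dots> = (\<Sum>j<n-1. kap^(Suc j) * S)" by (simp add: mult.assoc mult.commute mult.left_commute)
    finally show ?thesis
      unfolding Let_def lam_def[symmetric] kap_def[symmetric] .
  qed

  have Gm: "GW j m \<in> borel_measurable (info_alg M x d n k)" if "k \<in> {2..n}" "1 \<le> m" "m < k" for j m k
    unfolding GW_def by (rule Gn_meas[OF xm dm that(1) that(2,3)])
  have subn: "subalgebra M (info_alg M x d n n)"
  proof -
    have dmk: "\<And>j. j \<in> {2..<n} \<Longrightarrow> d j \<in> borel_measurable M" using dm by auto
    show ?thesis by (rule info_alg_facts(3)[of n x M n d, OF xm dmk])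
  qed
  have GmM: "GW j m \<in> borel_measurable M" if "1 \<le> m" "m < n" for j m
    by (rule measurable_from_subalg[OF subn Gm]) (use that n in auto)
  have Bx_m: "Bx \<in> sets M"
  proof -
    have s: "(\<lambda>\<omega>. \<Sum>q<k. (x (Suc q) \<omega> - \<mu>x)) \<in> borel_measurable M" if "k \<in> {..n}" for k
      by (rule borel_measurable_sum) (use that xm in auto)
    have "Bx = (\<Union>k\<in>{..n}. {\<omega> \<in> space M. \<bar>\<Sum>q<k. (x (Suc q) \<omega> - \<mu>x)\<bar> > lam * Cx * sqrt (real n)})"
      unfolding Bx_def by auto
    also have "\<dots> \<in> sets M" using s by (intro sets.finite_UN) (auto intro!: borel_measurable_less borel_measurable_abs)
    finally show ?thesis .
  qed
  have Bd_m: "Bd j \<in> sets M" for j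
  proof -
    have s: "(\<lambda>\<omega>. \<Sum>q<k. (GW j (Suc q) \<omega> * (if \<bar>GW j (Suc q) \<omega>\<bar> \<le> kap^j*S then 1 else 0)) * d (Suc (Suc q)) \<omega>) \<in> borel_measurable M"
      if "k \<in> {..n-1}" for k
    proof (rule borel_measurable_sum)
      fix q assume q: "q \<in> {..<k}"
      have [measurable]: "GW j (Suc q) \<in> borel_measurable M" by (rule GmM) (use q that in auto)
      have [measurable]: "d (Suc (Suc q)) \<in> borel_measurable M" by (rule dm) (use q that n in auto)
      show "(\<lambda>\<omega>. (GW j (Suc q) \<omega> * (if \<bar>GW j (Suc q) \<omega>\<bar> \<le> kap^j*S then 1 else 0)) * d (Suc (Suc q)) \<omega>) \<in> borel_measurable M"
        by measurable
    qed
    have "Bd j = (\<Union>k\<in>{..n-1}. {\<omega> \<in> space M. \<bar>\<Sum>q<k. (GW j (Suc q) \<omega> * (if \<bar>GW j (Suc q) \<omega>\<bar> \<le> kap^j*S then 1 else 0)) * d (Suc (Suc q)) \<omega>\<bar> > kap^(Suc j)*S})"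
      unfolding Bd_def by auto
    also have "\<dots> \<in> sets M" using s by (intro sets.finite_UN) (auto intro!: borel_measurable_less borel_measurable_abs)
    finally show ?thesis .
  qed
  have T_m: "T \<in> sets M"
  proof -
    have nn: "Suc (n-1) \<le> n" using n by simp
    have r: "(\<lambda>\<omega>. rec_sum (\<lambda>i. x i \<omega>) (\<lambda>l. d l \<omega>) n) \<in> borel_measurable M"
      using rec_meas[OF xm dm nn] n by simp
    have s: "(\<lambda>\<omega>. \<Sum>i=1..n. x i \<omega>) \<in> borel_measurable M"
      by (rule borel_measurable_sum) (use xm in auto)
    show ?thesis unfolding T_def bound_eq using r s by measurable
  qed
  have PBx: "measure M Bx \<le> \<delta> / real n"
  proof (cases "Cx = 0")
    case True
    have "Bx = {}"
    proof -
      have "(\<Sum>q<k. (x (Suc q) \<omega> - \<mu>x)) = 0" if "\<omega> \<in> space M" "k \<le> n" for \<omega> k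
        by (rule sum.neutral) (use bx[OF _ that(1)] that(2) True in \<open>fastforce\<close>)
      then show ?thesis unfolding Bx_def using True by auto
    qed
    then show ?thesis using d0 n by simp
  next
    case False
    then have Cxp: "Cx > 0" using Cx0 by simp
    have tp: "lam * Cx * sqrt (real n) > 0" using lam0 Cxp n by simp
    have "measure M Bx \<le> 2 * exp (-2*(lam * Cx * sqrt (real n))^2/(real n * (2*Cx)^2))"
      unfolding Bx_def by (rule xpart[OF P _ ind Ex bx Cxp tp]) (use n in simp)
    also have "\<dots> = 2 * exp (-(2*(lam * Cx * sqrt (real n))^2/(real n * (2*Cx)^2)))" by simp
    also have "\<dots> \<le> \<delta> / real n"
    proof (rule exp_aux[OF n d0 d1 lam_def])
      have "2*(lam * Cx * sqrt (real n))^2/(real n * (2*Cx)^2) = lam^2/2"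
        using Cxp n by (simp add: power_mult_distrib field_simps)
      then show "lam^2/2 \<le> 2*(lam * Cx * sqrt (real n))^2/(real n * (2*Cx)^2)" by simp
    qed
    finally show ?thesis .
  qed
  have PBd: "measure M (Bd j) \<le> \<delta> / real n" if j: "j < n-1" for j
  proof (cases "S = 0")
    case True
    have "Bd j = {}"
    proof -
      have "(\<Sum>q<k. (GW j (Suc q) \<omega> * (if \<bar>GW j (Suc q) \<omega>\<bar> \<le> kap^j*S then 1 else 0)) * d (Suc (Suc q)) \<omega>) = 0" for \<omega> k
        by (rule sum.neutral) (use True in auto)
      then show ?thesis unfolding Bd_def using True by auto
    qed
    then show ?thesis using d0 n by simp
  next
    case False
    then have Sp: "S > 0" using S0 by simp
    have Wp: "kap^j*S > 0" using Sp kap0 by simp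
    have tp: "kap^(Suc j)*S > 0" using Sp kap0 by simp
    have "measure M (Bd j) \<le> 2 * exp (-2*(kap^(Suc j)*S)^2/(real (n-1) * (2*u*(kap^j*S))^2))"
      unfolding Bd_def by (rule dpart[OF P n xm dm ce am bm ab abu u Gm Wp tp])
    also have "\<dots> = 2 * exp (-(2*(kap^(Suc j)*S)^2/(real (n-1) * (2*u*(kap^j*S))^2)))" by simp
    also have "\<dots> \<le> \<delta> / real n"
    proof (rule exp_aux[OF n d0 d1 lam_def])
      have kk: "kap^2 = lam^2 * real n * u^2" unfolding kap_def by (simp add: power_mult_distrib)
      have n1: "real (n-1) = real n - 1" using n by simp
      have "2*(kap^(Suc j)*S)^2/(real (n-1) * (2*u*(kap^j*S))^2) = kap^2 / (2 * real (n-1) * u^2)"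
        using Sp kap0 u n by (simp add: power_mult_distrib field_simps)
      also have "\<dots> = lam^2/2 * (real n / (real n - 1))" unfolding kk n1 using u n by (simp add: field_simps)
      also have "\<dots> \<ge> lam^2/2"
      proof -
        have "real n / (real n - 1) \<ge> 1" using n by (simp add: field_simps)
        then have "lam^2/2 * 1 \<le> lam^2/2 * (real n / (real n - 1))" by (intro mult_left_mono) auto
        then show ?thesis by simp
      qed
      finally show "lam^2/2 \<le> 2*(kap^(Suc j)*S)^2/(real (n-1) * (2*u*(kap^j*S))^2)" .
    qed
    finally show ?thesis .
  qed
  define Bad where "Bad = Bx \<union> (\<Union>j\<in>{..<n-1}. Bd j)"
  have Bad_m: "Bad \<in> sets M" unfolding Bad_def using Bx_m Bd_m by auto
  have good: "space M - Bad \<subseteq> T"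
  proof
    fix \<omega> assume w: "\<omega> \<in> space M - Bad"
    then have ws: "\<omega> \<in> space M" and nBx: "\<omega> \<notin> Bx" and nBd: "\<And>j. j < n-1 \<Longrightarrow> \<omega> \<notin> Bd j"
      unfolding Bad_def by auto
    have "\<bar>rec_sum (\<lambda>i. x i \<omega>) (\<lambda>l. d l \<omega>) n - (\<Sum>p=1..n. x p \<omega>)\<bar> \<le> (\<Sum>j<n-1. kap^(Suc j) * S)"
    proof (rule det_bound[OF n])
      fix m assume m: "1 \<le> m" "m \<le> n-1"
      have e1: "Gn 0 (\<lambda>i. x i \<omega>) (\<lambda>l. d l \<omega>) m = (\<Sum>q<Suc m. x (Suc q) \<omega>)"
        using sum.atLeast1_atMost_eq[of "\<lambda>p. x p \<omega>" "Suc m"] by simp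
      also have "\<dots> = (\<Sum>q<Suc m. (x (Suc q) \<omega> - \<mu>x)) + real (Suc m) * \<mu>x"
        by (simp add: sum_subtractf)
      finally have e: "Gn 0 (\<lambda>i. x i \<omega>) (\<lambda>l. d l \<omega>) m = (\<Sum>q<Suc m. (x (Suc q) \<omega> - \<mu>x)) + real (Suc m) * \<mu>x" .
      have all: "\<forall>k\<le>n. \<not> (\<bar>\<Sum>q<k. (x (Suc q) \<omega> - \<mu>x)\<bar> > lam * Cx * sqrt (real n))"
        using nBx ws unfolding Bx_def by blast
      have "Suc m \<le> n" using m n by simp
      then have "\<not> (\<bar>\<Sum>q<Suc m. (x (Suc q) \<omega> - \<mu>x)\<bar> > lam * Cx * sqrt (real n))" using all by blast
      then have b1: "\<bar>\<Sum>q<Suc m. (x (Suc q) \<omega> - \<mu>x)\<bar> \<le> lam * Cx * sqrt (real n)"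
        by (simp only: not_less)
      have b2: "\<bar>real (Suc m) * \<mu>x\<bar> \<le> real n * \<bar>\<mu>x\<bar>"
        using m n by (simp add: abs_mult mult_right_mono)
      show "\<bar>Gn 0 (\<lambda>i. x i \<omega>) (\<lambda>l. d l \<omega>) m\<bar> \<le> kap^0 * S"
        unfolding e S_def using b1 b2 by (simp add: abs_triangle_ineq order_trans[OF abs_triangle_ineq])
    next
      fix j k assume jk: "j < n-1" "k \<le> n-1"
      show "\<bar>\<Sum>q<k. (Gn j (\<lambda>i. x i \<omega>) (\<lambda>l. d l \<omega>) (Suc q) * (if \<bar>Gn j (\<lambda>i. x i \<omega>) (\<lambda>l. d l \<omega>) (Suc q)\<bar> \<le> kap^j * S then 1 else 0)) * d (Suc (Suc q)) \<omega>\<bar> \<le> kap^(Suc j) * S"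
        using nBd[OF jk(1)] ws jk(2) unfolding Bd_def GW_def by (auto simp: not_less)
    qed
    then show "\<omega> \<in> T" unfolding T_def bound_eq using ws by simp
  qed
  have "measure M Bad \<le> measure M Bx + measure M (\<Union>j\<in>{..<n-1}. Bd j)"
    unfolding Bad_def by (rule measure_Un_le[OF Bx_m]) (use Bd_m in auto)
  also have "measure M (\<Union>j\<in>{..<n-1}. Bd j) \<le> (\<Sum>j<n-1. measure M (Bd j))"
    by (rule measure_UNION_le) (use Bd_m in auto)
  also have "\<dots> \<le> (\<Sum>j<n-1. \<delta> / real n)" by (rule sum_mono) (use PBd in auto)
  finally have "measure M Bad \<le> \<delta> / real n + real (n-1) * (\<delta> / real n)" using PBx by simp
  also have "\<dots> = \<delta>" using n by (simp add: field_simps of_nat_diff)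
  finally have PB: "measure M Bad \<le> \<delta>" .
  have "1 - \<delta> \<le> 1 - measure M Bad" using PB by simp
  also have "\<dots> = measure M (space M - Bad)" using prob_compl[OF Bad_m] by simp
  also have "\<dots> \<le> measure M T" by (rule finite_measure_mono[OF good T_m])
  finally show ?thesis unfolding T_def .
qed

end
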